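(* Suppose that $\mathrm{rot}(\mathcal G)$ is finite and $\mathcal R\subset\mathcal G$ has Property 2. Then $\ker(\|\cdot\|_{\mathcal R})=U_{\mathrm{iso},0,0}$. Moreover, with $d_3=d-d_{\mathrm{aff}}$ and $d_4=d_{\mathrm{aff}}-d_2$, the map \[\mathbb R^d\times\mathbb R^{d_3\times d_4}\times\mathrm{Skew}(d_4)\to\ker(\|\cdot\|_{\mathcal R}),\quad(a,A_1,A_2)\mapsto\Big(g\mapsto\mathrm{rot}(g)^T\Big(a+\Big(\begin{pmatrix}0&A_1\\-A_1^T&A_2\end{pmatrix}\oplus0_{d_2\times d_2}\Big)(g\cdot x_0-x_0)\Big)\Big)\] is a linear isomorphism; in particular $\dim\ker(\|\cdot\|_{\mathcal R})=d+d_4(d_3+d_1-1)/2$.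
   Context: Euclidean group: $\mathrm E(n)$ consists of pairs $(A|b)$, $A\in\mathrm O(n)$, $b\in\mathbb R^n$, acting by $(A|b)\cdot x=Ax+b$, product $(A_1|b_1)(A_2|b_2)=(A_1A_2|b_1+A_1b_2)$; $\mathrm{rot}(A|b)=A$. Standing setting: $d=d_1+d_2$; $\mathcal S<\mathrm E(d_2)$ is a space group with translation subgroup $\mathcal T_{\mathcal S}$; $A\oplus(B|b)=(\mathrm{diag}(A,B)|(0,b))$; $\mathcal G$ is a discrete subgroup of $\mathrm E(d)$ contained in $\{A\oplus s:A\in\mathrm O(d_1),s\in\mathcal S\}$ projecting onto $\mathcal S$; $\mathcal T\subset\mathcal G$ maps bijectively onto $\mathcal T_{\mathcal S}$. There is $m_0\in\mathbb N$ such that $\mathcal T^N=\{t^N:t\in\mathcal T\}$ is a normal subgroup iff $N\in\mathcal M=m_0\mathbb N$, then isomorphic to $\mathbb Z^{d_2}$ of finite index; $\mathcal C_N$ is a fixed set of representatives of $\mathcal G/\mathcal T^N$. $U_{\mathrm{per}}$: maps $u:\mathcal G\to\mathbb R^d$ that are $\mathcal T^N$-periodic ($u(gt)=u(g)$ for $t\in\mathcal T^N$) for some $N\in\mathcal M$. $x_0\in\mathbb R^d$ with $g\mapsto g\cdot x_0$ injective; $d_{\mathrm{aff}}=\dim\mathrm{aff}(\mathcal G\cdot x_0)$; assumed $\mathcal G\cdot x_0\subset\{0_{d-d_{\mathrm{aff}}}\}\times\mathbb R^{d_{\mathrm{aff}}}$ and $\mathcal G$ acts trivially on $\mathbb R^{d-d_{\mathrm{aff}}}\times\{0\}$.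 For $\mathcal R\subset\mathcal G$, $U_{\mathrm{iso}}(\mathcal R)$: maps $v:\mathcal R\to\mathbb R^d$ with $a\in\mathbb R^d$, $S\in\mathrm{Skew}(d)$ such that $\mathrm{rot}(g)v(g)=a+S(g\cdot x_0-x_0)$ on $\mathcal R$. For finite $\mathcal R$ and $\mathcal T^N$-periodic $u$: $\|u\|_{\mathcal R}=\big(\frac1{|\mathcal C_N|}\sum_{g\in\mathcal C_N}\mathrm{dist}(u(g\,\cdot)|_{\mathcal R},U_{\mathrm{iso}}(\mathcal R))^2\big)^{1/2}$. $U_{\mathrm{iso},0,0}$: maps $u:\mathcal G\to\mathbb R^d$ with $a\in\mathbb R^d$, $S\in\mathrm{Skew}(d_1)$ such that $\mathrm{rot}(g)u(g)=a+(S\oplus0_{d_2\times d_2})(g\cdot x_0-x_0)$ for all $g\in\mathcal G$. Property 1: $\mathcal R$ finite, $\mathrm{id}\in\mathcal R$, $\mathrm{aff}(\mathcal R\cdot x_0)=\mathrm{aff}(\mathcal G\cdot x_0)$. Property 2: $\mathcal R$ finite, and there are $\mathcal R',\mathcal R''$ with $\mathrm{id}\in\mathcal R'$, $\mathcal R'$ generating $\mathcal G$, $\mathcal R''$ with Property 1, and $\{gh:g\in\mathcal R',h\in\mathcal R''\}\subset\mathcal R$. *)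

theory Defs
  imports "Jordan_Normal_Form.Matrix" "HOL-Library.FuncSet"
begin

type_synonym euc = "real mat \<times> real vec"

definition orth_group :: "nat \<Rightarrow> real mat set" where
  "orth_group n = {A \<in> carrier_mat n n. A\<^sup>T * A = 1\<^sub>m n}"

definition skew :: "nat \<Rightarrow> real mat set" where
  "skew n = {S \<in> carrier_mat n n. S\<^sup>T = - S}"

definition eucl :: "nat \<Rightarrow> euc set" where
  "eucl n = {(A, b). A \<in> orth_group n \<and> b \<in> carrier_vec n}"

definition rot :: "euc \<Rightarrow> real mat" where
  "rot g = fst g"

definition emult :: "euc \<Rightarrow> euc \<Rightarrow> euc" where
  "emult g h = (fst g * fst h, snd g + fst g *\<^sub>v snd h)"

definition eid :: "nat \<Rightarrow> euc" where
  "eid n = (1\<^sub>m n, 0\<^sub>v n)"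

definition einv :: "euc \<Rightarrow> euc" where
  "einv g = ((fst g)\<^sup>T, - ((fst g)\<^sup>T *\<^sub>v snd g))"

definition eact :: "euc \<Rightarrow> real vec \<Rightarrow> real vec" where
  "eact g x = fst g *\<^sub>v x + snd g"

fun epow :: "nat \<Rightarrow> euc \<Rightarrow> nat \<Rightarrow> euc" where
  "epow n g 0 = eid n"
| "epow n g (Suc k) = emult g (epow n g k)"

definition esubgroup :: "nat \<Rightarrow> euc set \<Rightarrow> bool" where
  "esubgroup n H \<longleftrightarrow> H \<subseteq> eucl n \<and> eid n \<in> H \<and>
     (\<forall>g\<in>H. \<forall>h\<in>H. emult g h \<in> H) \<and> (\<forall>g\<in>H. einv g \<in> H)"

definition enormal :: "nat \<Rightarrow> euc set \<Rightarrow> euc set \<Rightarrow> bool" where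
  "enormal n H G \<longleftrightarrow> esubgroup n H \<and> H \<subseteq> G \<and>
     (\<forall>g\<in>G. \<forall>h\<in>H. emult (emult g h) (einv g) \<in> H)"

definition eclose :: "nat \<Rightarrow> real \<Rightarrow> euc \<Rightarrow> euc \<Rightarrow> bool" where
  "eclose n \<epsilon> g h \<longleftrightarrow> (\<forall>i<n. \<forall>j<n. \<bar>fst g $$ (i,j) - fst h $$ (i,j)\<bar> < \<epsilon>)
                       \<and> (\<forall>i<n. \<bar>snd g $ i - snd h $ i\<bar> < \<epsilon>)"

text \<open>Discrete subgroup of E(n): the identity is isolated (equivalent to discreteness
  of the subgroup in the topological group E(n)).\<close>
definition discrete_esubgroup :: "nat \<Rightarrow> euc set \<Rightarrow> bool" where
  "discrete_esubgroup n G \<longleftrightarrow> esubgroup n G \<and>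
     (\<exists>\<epsilon>>0. \<forall>g\<in>G. eclose n \<epsilon> g (eid n) \<longrightarrow> g = eid n)"

inductive_set egen :: "nat \<Rightarrow> euc set \<Rightarrow> euc set" for n X where
  egen_id: "eid n \<in> egen n X"
| egen_base: "x \<in> X \<Longrightarrow> x \<in> egen n X"
| egen_mult: "g \<in> egen n X \<Longrightarrow> h \<in> egen n X \<Longrightarrow> emult g h \<in> egen n X"
| egen_inv: "g \<in> egen n X \<Longrightarrow> einv g \<in> egen n X"

definition lin_indep_vecs :: "nat \<Rightarrow> real vec list \<Rightarrow> bool" where
  "lin_indep_vecs n vs \<longleftrightarrow> (\<forall>c :: nat \<Rightarrow> real.
     (\<forall>j<n. (\<Sum>i<length vs. c i * (vs ! i) $ j) = 0) \<longrightarrow> (\<forall>i<length vs. c i = 0))"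

definition affhull :: "nat \<Rightarrow> real vec set \<Rightarrow> real vec set" where
  "affhull n X = {v \<in> carrier_vec n. \<exists>F (c :: real vec \<Rightarrow> real).
      finite F \<and> F \<noteq> {} \<and> F \<subseteq> X \<and> sum c F = 1 \<and>
      (\<forall>j<n. v $ j = (\<Sum>x\<in>F. c x * x $ j))}"

definition affdim :: "nat \<Rightarrow> real vec set \<Rightarrow> nat" where
  "affdim n X = (GREATEST k. \<exists>p\<in>X. \<exists>qs. set qs \<subseteq> X \<and> length qs = k \<and>
                    lin_indep_vecs n (map (\<lambda>q. q - p) qs))"

definition transl_sub :: "nat \<Rightarrow> euc set \<Rightarrow> euc set" where
  "transl_sub n S = {s \<in> S. rot s = 1\<^sub>m n}"

definition space_group :: "nat \<Rightarrow> euc set \<Rightarrow> bool" where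
  "space_group n S \<longleftrightarrow> discrete_esubgroup n S \<and>
     (\<exists>ts. set ts \<subseteq> transl_sub n S \<and> length ts = n \<and> lin_indep_vecs n (map snd ts))"

definition dsum :: "nat \<Rightarrow> nat \<Rightarrow> real mat \<Rightarrow> euc \<Rightarrow> euc" where
  "dsum d1 d2 A s = (four_block_mat A (0\<^sub>m d1 d2) (0\<^sub>m d2 d1) (fst s), 0\<^sub>v d1 @\<^sub>v snd s)"

definition mdsum :: "real mat \<Rightarrow> real mat \<Rightarrow> real mat" where
  "mdsum A B = four_block_mat A (0\<^sub>m (dim_row A) (dim_col B)) (0\<^sub>m (dim_row B) (dim_col A)) B"

definition eproj :: "nat \<Rightarrow> nat \<Rightarrow> euc \<Rightarrow> euc" where
  "eproj d1 d2 g = (mat d2 d2 (\<lambda>(i,j). fst g $$ (d1 + i, d1 + j)), vec d2 (\<lambda>i. snd g $ (d1 + i)))"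

definition TNpow :: "nat \<Rightarrow> euc set \<Rightarrow> nat \<Rightarrow> euc set" where
  "TNpow n T N = {epow n t N | t. t \<in> T}"

definition periodic :: "euc set \<Rightarrow> euc set \<Rightarrow> (euc \<Rightarrow> real vec) \<Rightarrow> bool" where
  "periodic G TN u \<longleftrightarrow> (\<forall>g\<in>G. \<forall>t\<in>TN. u (emult g t) = u g)"

definition U_iso :: "nat \<Rightarrow> real vec \<Rightarrow> euc set \<Rightarrow> (euc \<Rightarrow> real vec) set" where
  "U_iso d x0 R = {v \<in> extensional R. (\<forall>h\<in>R. v h \<in> carrier_vec d) \<and>
      (\<exists>a\<in>carrier_vec d. \<exists>S\<in>skew d. \<forall>h\<in>R. rot h *\<^sub>v v h = a + S *\<^sub>v (eact h x0 - x0))}"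

definition fdist :: "euc set \<Rightarrow> (euc \<Rightarrow> real vec) \<Rightarrow> (euc \<Rightarrow> real vec) \<Rightarrow> real" where
  "fdist R v w = sqrt (\<Sum>h\<in>R. (v h - w h) \<bullet> (v h - w h))"

definition setdist :: "euc set \<Rightarrow> (euc \<Rightarrow> real vec) \<Rightarrow> (euc \<Rightarrow> real vec) set \<Rightarrow> real" where
  "setdist R v U = Inf {fdist R v w | w. w \<in> U}"

definition seminormR :: "nat \<Rightarrow> real vec \<Rightarrow> euc set \<Rightarrow> euc set \<Rightarrow> (euc \<Rightarrow> real vec) \<Rightarrow> real" where
  "seminormR d x0 R C u = sqrt (1 / real (card C) *
      (\<Sum>g\<in>C. (setdist R (restrict (\<lambda>h. u (emult g h)) R) (U_iso d x0 R))\<^sup>2))"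

definition property1 :: "nat \<Rightarrow> real vec \<Rightarrow> euc set \<Rightarrow> euc set \<Rightarrow> bool" where
  "property1 d x0 G R \<longleftrightarrow> R \<subseteq> G \<and> finite R \<and> eid d \<in> R \<and>
     affhull d ((\<lambda>g. eact g x0) ` R) = affhull d ((\<lambda>g. eact g x0) ` G)"

definition property2 :: "nat \<Rightarrow> real vec \<Rightarrow> euc set \<Rightarrow> euc set \<Rightarrow> bool" where
  "property2 d x0 G R \<longleftrightarrow> R \<subseteq> G \<and> finite R \<and>
     (\<exists>R' R''. R' \<subseteq> G \<and> eid d \<in> R' \<and> egen d R' = G \<and> property1 d x0 G R'' \<and>
        {emult g h | g h. g \<in> R' \<and> h \<in> R''} \<subseteq> R)"


definition periods :: "nat \<Rightarrow> nat set" where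
  "periods m0 = {N. N \<ge> 1 \<and> m0 dvd N}"

definition U_per :: "nat \<Rightarrow> euc set \<Rightarrow> euc set \<Rightarrow> nat \<Rightarrow> (euc \<Rightarrow> real vec) set" where
  "U_per d G T m0 = {u \<in> extensional G. (\<forall>g\<in>G. u g \<in> carrier_vec d) \<and>
      (\<exists>N\<in>periods m0. periodic G (TNpow d T N) u)}"

text \<open>Kernel of the seminorm on U_per (for u T^N-periodic, the seminorm is computed
  with the representatives C N; it does not depend on the admissible N chosen).\<close>
definition kerR :: "nat \<Rightarrow> euc set \<Rightarrow> euc set \<Rightarrow> nat \<Rightarrow> (nat \<Rightarrow> euc set) \<Rightarrow> real vec
     \<Rightarrow> euc set \<Rightarrow> (euc \<Rightarrow> real vec) set" where
  "kerR d G T m0 C x0 R = {u \<in> U_per d G T m0. \<exists>N\<in>periods m0.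
      periodic G (TNpow d T N) u \<and> seminormR d x0 R (C N) u = 0}"

definition U_iso00 :: "nat \<Rightarrow> nat \<Rightarrow> euc set \<Rightarrow> real vec \<Rightarrow> (euc \<Rightarrow> real vec) set" where
  "U_iso00 d1 d2 G x0 = {u \<in> extensional G. (\<forall>g\<in>G. u g \<in> carrier_vec (d1 + d2)) \<and>
      (\<exists>a\<in>carrier_vec (d1 + d2). \<exists>S\<in>skew d1. \<forall>g\<in>G.
          rot g *\<^sub>v u g = a + mdsum S (0\<^sub>m d2 d2) *\<^sub>v (eact g x0 - x0))}"

definition param_dom :: "nat \<Rightarrow> nat \<Rightarrow> nat \<Rightarrow> (real vec \<times> real mat \<times> real mat) set" where
  "param_dom d d3 d4 = {(a, A1, A2). a \<in> carrier_vec d \<and> A1 \<in> carrier_mat d3 d4 \<and> A2 \<in> skew d4}"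

definition PhiMap :: "nat \<Rightarrow> nat \<Rightarrow> nat \<Rightarrow> euc set \<Rightarrow> real vec
     \<Rightarrow> real vec \<times> real mat \<times> real mat \<Rightarrow> (euc \<Rightarrow> real vec)" where
  "PhiMap d2 d3 d4 G x0 p = (case p of (a, A1, A2) \<Rightarrow>
     restrict (\<lambda>g. (rot g)\<^sup>T *\<^sub>v
        (a + mdsum (four_block_mat (0\<^sub>m d3 d3) A1 (- A1\<^sup>T) A2) (0\<^sub>m d2 d2) *\<^sub>v (eact g x0 - x0))) G)"

end

theory Submission
  imports Defs "Jordan_Normal_Form.Determinant"
begin

lemma orth_carrier: "A \<in> orth_group n \<Longrightarrow> A \<in> carrier_mat n n"
  by (simp add: orth_group_def)
lemma orth_left: "A \<in> orth_group n \<Longrightarrow> A\<^sup>T * A = 1\<^sub>m n"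
  by (simp add: orth_group_def)
lemma orth_right: "A \<in> orth_group n \<Longrightarrow> A * A\<^sup>T = 1\<^sub>m n"
  using mat_mult_left_right_inverse[of "A\<^sup>T" n A] by (auto simp: orth_group_def)

lemma eucl_rot: "g \<in> eucl n \<Longrightarrow> rot g \<in> orth_group n"
  by (auto simp: eucl_def rot_def)
lemma eucl_fst: "g \<in> eucl n \<Longrightarrow> fst g \<in> carrier_mat n n"
  by (auto simp: eucl_def orth_group_def)
lemma eucl_rotc: "g \<in> eucl n \<Longrightarrow> rot g \<in> carrier_mat n n"
  by (auto simp: eucl_def orth_group_def rot_def)
lemma eucl_snd: "g \<in> eucl n \<Longrightarrow> snd g \<in> carrier_vec n"
  by (auto simp: eucl_def)

lemma mv_uminus: fixes A :: "real mat" assumes A: "A \<in> carrier_mat n m" and v: "v \<in> carrier_vec m" shows "A *\<^sub>v (- v) = - (A *\<^sub>v v)"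
proof (intro eq_vecI)
  fix i assume "i < dim_vec (- (A *\<^sub>v v))"
  then have i: "i < n" using A by simp
  have "(\<Sum>ia = 0..<m. A $$ (i, ia) * (- v) $ ia) = (\<Sum>ia = 0..<m. - (A $$ (i, ia) * v $ ia))"
    using v by (intro sum.cong) (auto simp: carrier_vecD)
  then show "(A *\<^sub>v (- v)) $ i = (- (A *\<^sub>v v)) $ i"
    using A v i by (simp add: scalar_prod_def sum_negf)
qed (use A in auto)

lemma emult_assoc:
  assumes "g \<in> eucl n" "h \<in> eucl n" "k \<in> eucl n"
  shows "emult (emult g h) k = emult g (emult h k)"
proof -
  have c: "fst g \<in> carrier_mat n n" "fst h \<in> carrier_mat n n" "fst k \<in> carrier_mat n n"
    "snd g \<in> carrier_vec n" "snd h \<in> carrier_vec n" "snd k \<in> carrier_vec n"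
    using assms eucl_fst eucl_snd by auto
  have "fst g * fst h * fst k = fst g * (fst h * fst k)"
    using c by (simp add: assoc_mult_mat[of _ n n _ n _ n])
  moreover have "snd g + fst g *\<^sub>v snd h + fst g * fst h *\<^sub>v snd k
      = snd g + fst g *\<^sub>v (snd h + fst h *\<^sub>v snd k)"
    using c by (simp add: mult_add_distrib_mat_vec[of _ n n] assoc_add_vec[of _ n])
  ultimately show ?thesis by (simp add: emult_def)
qed

lemma eact_emult:
  assumes "g \<in> eucl n" "h \<in> eucl n" "x \<in> carrier_vec n"
  shows "eact (emult g h) x = eact g (eact h x)"
proof -
  have c: "fst g \<in> carrier_mat n n" "fst h \<in> carrier_mat n n"
    "snd g \<in> carrier_vec n" "snd h \<in> carrier_vec n"
    using assms eucl_fst eucl_snd by auto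
  show ?thesis using c assms(3)
    by (simp add: eact_def emult_def mult_add_distrib_mat_vec[of _ n n]) (intro eq_vecI, auto)
qed

lemma eid_eucl: "eid n \<in> eucl n"
  by (simp add: eid_def eucl_def orth_group_def)

lemma emult_eid_left: "g \<in> eucl n \<Longrightarrow> emult (eid n) g = g"
  using eucl_fst[of g n] eucl_snd[of g n] by (cases g) (auto simp: emult_def eid_def)
lemma emult_eid_right: "g \<in> eucl n \<Longrightarrow> emult g (eid n) = g"
  using eucl_fst[of g n] eucl_snd[of g n] by (cases g) (auto simp: emult_def eid_def)

lemma einv_right: assumes "g \<in> eucl n" shows "emult g (einv g) = eid n"
proof -
  have c: "fst g \<in> carrier_mat n n" "snd g \<in> carrier_vec n" using assms eucl_fst eucl_snd by auto
  have o: "fst g * (fst g)\<^sup>T = 1\<^sub>m n" using orth_right eucl_rot[OF assms] by (simp add: rot_def)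
  have "fst g *\<^sub>v (- ((fst g)\<^sup>T *\<^sub>v snd g)) = - snd g"
  proof -
    have "fst g *\<^sub>v (- ((fst g)\<^sup>T *\<^sub>v snd g)) = - (fst g *\<^sub>v ((fst g)\<^sup>T *\<^sub>v snd g))"
      using c by (intro mv_uminus[of _ n n]) auto
    also have "\<dots> = - ((fst g * (fst g)\<^sup>T) *\<^sub>v snd g)" using c by (subst assoc_mult_mat_vec[of _ n n _ n], auto)
    finally show ?thesis using o c by simp
  qed
  then show ?thesis using o c by (simp add: emult_def einv_def eid_def)
qed

lemma inj_right_inv:
  fixes Q :: "real mat"
  assumes Q: "Q \<in> carrier_mat k k"
    and inj: "\<And>v. v \<in> carrier_vec k \<Longrightarrow> Q *\<^sub>v v = 0\<^sub>v k \<Longrightarrow> v = 0\<^sub>v k"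
  shows "\<exists>B \<in> carrier_mat k k. Q * B = 1\<^sub>m k"
proof -
  have "det Q \<noteq> 0" using det_0_iff_vec_prod_zero_field[OF Q] inj by blast
  from det_non_zero_imp_unit[OF Q this, of "()"]
  show ?thesis unfolding Units_def ring_mat_def by auto
qed

lemma mv_index: "A \<in> carrier_mat n k \<Longrightarrow> v \<in> carrier_vec k \<Longrightarrow> i < n \<Longrightarrow>
   (A *\<^sub>v v) $ i = (\<Sum>l<k. A $$ (i, l) * v $ l)"
  by (auto simp: scalar_prod_def lessThan_atLeast0 intro!: sum.cong)

lemma LA_span:
  fixes vs :: "real vec list"
  assumes li: "lin_indep_vecs n vs" and len: "length vs + m = n"
    and z: "\<forall>v\<in>set vs. \<forall>j<m. v $ j = 0"
  shows "\<exists>c. \<forall>j. m \<le> j \<and> j < n \<longrightarrow> y $ j = (\<Sum>i<length vs. c i * vs ! i $ j)"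
proof -
  define k where "k = length vs"
  define Q where "Q = mat k k (\<lambda>(a, i). vs ! i $ (m + a))"
  have Qc: "Q \<in> carrier_mat k k" by (simp add: Q_def)
  have inj: "v = 0\<^sub>v k" if v: "v \<in> carrier_vec k" and Qv: "Q *\<^sub>v v = 0\<^sub>v k" for v
  proof -
    have all: "(\<Sum>i<k. v $ i * vs ! i $ j) = 0" if j: "j < n" for j
    proof (cases "j < m")
      case True
      then show ?thesis using z by (auto simp: k_def intro!: sum.neutral)
    next
      case False
      then have a: "j - m < k" using j len k_def by auto
      have "(Q *\<^sub>v v) $ (j - m) = 0" using Qv a by simp
      then have "(\<Sum>l<k. Q $$ (j - m, l) * v $ l) = 0" using mv_index[OF Qc v a] by simp
      moreover have "(\<Sum>l<k. Q $$ (j - m, l) * v $ l) = (\<Sum>i<k. v $ i * vs ! i $ j)"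
        using a False by (intro sum.cong) (auto simp: Q_def)
      ultimately show ?thesis by simp
    qed
    have "\<forall>i<k. v $ i = 0" using li all unfolding lin_indep_vecs_def k_def by blast
    then show ?thesis using v by (intro eq_vecI) auto
  qed
  obtain B where B: "B \<in> carrier_mat k k" "Q * B = 1\<^sub>m k" using inj_right_inv[OF Qc] inj by blast
  define yv where "yv = vec k (\<lambda>a. y $ (m + a))"
  define cv where "cv = B *\<^sub>v yv"
  have cvc: "cv \<in> carrier_vec k" using B by (simp add: cv_def yv_def)
  have "Q *\<^sub>v cv = (Q * B) *\<^sub>v yv" using B Qc assoc_mult_mat_vec[of Q k k B k yv] by (simp add: cv_def yv_def)
  also have "\<dots> = yv" using B by (simp add: yv_def)
  finally have Qcv: "Q *\<^sub>v cv = yv" .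
  show ?thesis
  proof (intro exI[of _ "\<lambda>i. cv $ i"] allI impI)
    fix j assume j: "m \<le> j \<and> j < n"
    then have a: "j - m < k" using len k_def by auto
    have "y $ j = yv $ (j - m)" using a j by (simp add: yv_def)
    also have "\<dots> = (\<Sum>l<k. Q $$ (j - m, l) * cv $ l)" using mv_index[OF Qc cvc a] Qcv by simp
    also have "\<dots> = (\<Sum>i<length vs. cv $ i * vs ! i $ j)"
      using a j by (auto simp: Q_def k_def intro!: sum.cong)
    finally show "y $ j = (\<Sum>i<length vs. cv $ i * vs ! i $ j)" .
  qed
qed

lemma LA_bound:
  fixes vs :: "real vec list"
  assumes li: "lin_indep_vecs n vs"
  shows "length vs \<le> n"
proof (rule ccontr)
  assume "\<not> length vs \<le> n"
  then have L: "n < length vs" by simp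
  define ws where "ws = take n vs"
  have lws: "length ws = n" using L by (simp add: ws_def)
  have liw: "lin_indep_vecs n ws"
    unfolding lin_indep_vecs_def
  proof (intro allI impI)
    fix c :: "nat \<Rightarrow> real" and i
    assume h: "\<forall>j<n. (\<Sum>i<length ws. c i * ws ! i $ j) = 0" and i: "i < length ws"
    define c' where "c' = (\<lambda>i. if i < n then c i else 0)"
    have "\<forall>j<n. (\<Sum>i<length vs. c' i * vs ! i $ j) = 0"
    proof (intro allI impI)
      fix j assume j: "j < n"
      have "(\<Sum>i<length vs. c' i * vs ! i $ j) = (\<Sum>i<n. c' i * vs ! i $ j)"
        using L by (intro sum.mono_neutral_right) (auto simp: c'_def)
      also have "\<dots> = (\<Sum>i<length ws. c i * ws ! i $ j)"
        using lws by (intro sum.cong) (auto simp: c'_def ws_def)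
      finally show "(\<Sum>i<length vs. c' i * vs ! i $ j) = 0" using h j by simp
    qed
    then have "\<forall>i<length vs. c' i = 0" using li unfolding lin_indep_vecs_def by blast
    then show "c i = 0" using i lws L unfolding c'_def by (metis order.strict_trans)
  qed
  obtain c where c: "\<forall>j. 0 \<le> j \<and> j < n \<longrightarrow> vs ! n $ j = (\<Sum>i<length ws. c i * ws ! i $ j)"
    using LA_span[OF liw, of 0 "vs ! n"] lws by auto
  define c' where "c' = (\<lambda>i. if i < n then c i else if i = n then -1 else (0::real))"
  have "\<forall>j<n. (\<Sum>i<length vs. c' i * vs ! i $ j) = 0"
  proof (intro allI impI)
    fix j assume j: "j < n"
    have "(\<Sum>i<length vs. c' i * vs ! i $ j) = (\<Sum>i<Suc n. c' i * vs ! i $ j)"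
      using L by (intro sum.mono_neutral_right) (auto simp: c'_def)
    also have "\<dots> = (\<Sum>i<n. c' i * vs ! i $ j) - vs ! n $ j" by (simp add: c'_def)
    also have "(\<Sum>i<n. c' i * vs ! i $ j) = (\<Sum>i<length ws. c i * ws ! i $ j)"
      using lws by (intro sum.cong) (auto simp: c'_def ws_def)
    finally show "(\<Sum>i<length vs. c' i * vs ! i $ j) = 0" using c j by simp
  qed
  then have "c' n = 0" using li L unfolding lin_indep_vecs_def by blast
  then show False by (simp add: c'_def)
qed

lemma einv_left: assumes "g \<in> eucl n" shows "emult (einv g) g = eid n"
proof -
  have c: "fst g \<in> carrier_mat n n" "snd g \<in> carrier_vec n" using assms eucl_fst eucl_snd by auto
  have o: "(fst g)\<^sup>T * fst g = 1\<^sub>m n" using orth_left eucl_rot[OF assms] by (simp add: rot_def)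
  have "- ((fst g)\<^sup>T *\<^sub>v snd g) + (fst g)\<^sup>T *\<^sub>v snd g = 0\<^sub>v n"
    using c by (intro eq_vecI) auto
  then show ?thesis using o by (simp add: emult_def einv_def eid_def)
qed

lemma einv_eucl: assumes "g \<in> eucl n" shows "einv g \<in> eucl n"
proof -
  have c: "fst g \<in> carrier_mat n n" "snd g \<in> carrier_vec n" using assms eucl_fst eucl_snd by auto
  have o: "fst g * (fst g)\<^sup>T = 1\<^sub>m n" using orth_right eucl_rot[OF assms] by (simp add: rot_def)
  show ?thesis using c o by (auto simp: einv_def eucl_def orth_group_def)
qed

lemma einv_einv: assumes "g \<in> eucl n" shows "einv (einv g) = g"
proof -
  have c: "fst g \<in> carrier_mat n n" "snd g \<in> carrier_vec n" using assms eucl_fst eucl_snd by auto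
  have o: "fst g * (fst g)\<^sup>T = 1\<^sub>m n" using orth_right eucl_rot[OF assms] by (simp add: rot_def)
  have "fst g *\<^sub>v (- ((fst g)\<^sup>T *\<^sub>v snd g)) = - snd g"
  proof -
    have "fst g *\<^sub>v (- ((fst g)\<^sup>T *\<^sub>v snd g)) = - (fst g *\<^sub>v ((fst g)\<^sup>T *\<^sub>v snd g))"
      using c by (intro mv_uminus[of _ n n]) auto
    also have "\<dots> = - ((fst g * (fst g)\<^sup>T) *\<^sub>v snd g)" using c by (subst assoc_mult_mat_vec[of _ n n _ n], auto)
    finally show ?thesis using o c by simp
  qed
  then have "- ((fst g)\<^sup>T\<^sup>T *\<^sub>v - ((fst g)\<^sup>T *\<^sub>v snd g)) = snd g" by simp
  then show ?thesis by (cases g) (simp add: einv_def)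
qed

lemma sg_eucl: "esubgroup n G \<Longrightarrow> g \<in> G \<Longrightarrow> g \<in> eucl n"
  by (auto simp: esubgroup_def)
lemma sg_eid: "esubgroup n G \<Longrightarrow> eid n \<in> G"
  by (auto simp: esubgroup_def)
lemma sg_mult: "esubgroup n G \<Longrightarrow> g \<in> G \<Longrightarrow> h \<in> G \<Longrightarrow> emult g h \<in> G"
  by (auto simp: esubgroup_def)
lemma sg_inv: "esubgroup n G \<Longrightarrow> g \<in> G \<Longrightarrow> einv g \<in> G"
  by (auto simp: esubgroup_def)
lemma sg_epow: "esubgroup n G \<Longrightarrow> g \<in> G \<Longrightarrow> epow n g k \<in> G"
  by (induction k) (auto simp: sg_eid sg_mult)

lemma epow_add: assumes "esubgroup n G" "g \<in> G"
  shows "epow n g (a + b) = emult (epow n g a) (epow n g b)"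
proof (induction a)
  case 0
  then show ?case using emult_eid_left sg_eucl[OF assms(1) sg_epow[OF assms]] by simp
next
  case (Suc a)
  have "epow n g (Suc a + b) = emult g (emult (epow n g a) (epow n g b))" using Suc by simp
  also have "\<dots> = emult (emult g (epow n g a)) (epow n g b)"
    using emult_assoc[OF sg_eucl[OF assms(1) assms(2)] sg_eucl[OF assms(1) sg_epow[OF assms, of a]]
       sg_eucl[OF assms(1) sg_epow[OF assms, of b]]] by simp
  finally show ?case by (simp only: epow.simps)
qed

lemma epow_mult: assumes "esubgroup n G" "g \<in> G"
  shows "epow n g (a * b) = epow n (epow n g a) b"
proof (induction b)
  case 0
  then show ?case by simp
next
  case (Suc b)
  have "epow n g (a * Suc b) = epow n g (a + a * b)" by (simp add: mult_Suc_right)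
  also have "\<dots> = emult (epow n g a) (epow n g (a * b))" by (rule epow_add[OF assms])
  also have "\<dots> = emult (epow n g a) (epow n (epow n g a) b)" by (simp only: Suc)
  finally show ?case by (simp only: epow.simps)
qed

lemma rot_emult: "rot (emult g h) = rot g * rot h"
  by (simp add: rot_def emult_def)

lemma zero_mv[simp]: "v \<in> carrier_vec m \<Longrightarrow> 0\<^sub>m n m *\<^sub>v v = (0\<^sub>v n :: real vec)"
  by (intro eq_vecI) (auto simp: scalar_prod_def intro!: sum.neutral)
lemma mv_zero[simp]: "A \<in> carrier_mat n m \<Longrightarrow> A *\<^sub>v 0\<^sub>v m = (0\<^sub>v n :: real vec)"
  by (intro eq_vecI) (auto simp: scalar_prod_def)

lemma dsum_mv:
  assumes A: "A \<in> carrier_mat d1 d1" and B: "B \<in> carrier_mat d2 d2" and x: "x \<in> carrier_vec (d1 + d2)"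
  shows "fst (dsum d1 d2 A (B, b)) *\<^sub>v x = (A *\<^sub>v vec_first x d1) @\<^sub>v (B *\<^sub>v vec_last x d2)"
proof -
  have "fst (dsum d1 d2 A (B, b)) *\<^sub>v x = four_block_mat A (0\<^sub>m d1 d2) (0\<^sub>m d2 d1) B *\<^sub>v (vec_first x d1 @\<^sub>v vec_last x d2)"
    using x by (simp add: dsum_def)
  also have "\<dots> = (A *\<^sub>v vec_first x d1 + 0\<^sub>m d1 d2 *\<^sub>v vec_last x d2) @\<^sub>v (0\<^sub>m d2 d1 *\<^sub>v vec_first x d1 + B *\<^sub>v vec_last x d2)"
    using A B by (intro four_block_mat_mult_vec) auto
  also have "\<dots> = (A *\<^sub>v vec_first x d1) @\<^sub>v (B *\<^sub>v vec_last x d2)"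
    using A B by simp
  finally show ?thesis .
qed

lemma dsum_fst_carrier:
  "A \<in> carrier_mat d1 d1 \<Longrightarrow> B \<in> carrier_mat d2 d2 \<Longrightarrow> fst (dsum d1 d2 A (B, b)) \<in> carrier_mat (d1 + d2) (d1 + d2)"
  by (simp add: dsum_def)

lemma eproj_dsum:
  assumes A: "A \<in> carrier_mat d1 d1" and B: "B \<in> carrier_mat d2 d2" and b: "b \<in> carrier_vec d2"
  shows "eproj d1 d2 (dsum d1 d2 A (B, b)) = (B, b)"
proof -
  have "mat d2 d2 (\<lambda>(i, j). fst (dsum d1 d2 A (B, b)) $$ (d1 + i, d1 + j)) = B"
    using A B by (intro eq_matI) (auto simp: dsum_def)
  moreover have "vec d2 (\<lambda>i. snd (dsum d1 d2 A (B, b)) $ (d1 + i)) = b"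
    using b by (intro eq_vecI) (auto simp: dsum_def)
  ultimately show ?thesis by (simp add: eproj_def)
qed

lemma epow_transl_snd:
  assumes A: "A \<in> carrier_mat d1 d1" and b: "b \<in> carrier_vec d2"
  shows "snd (epow (d1 + d2) (dsum d1 d2 A (1\<^sub>m d2, b)) n) = 0\<^sub>v d1 @\<^sub>v (real n \<cdot>\<^sub>v b)"
proof (induction n)
  case 0
  have "snd (eid (d1 + d2)) = (0\<^sub>v (d1 + d2) :: real vec)" by (simp add: eid_def)
  also have "\<dots> = 0\<^sub>v d1 @\<^sub>v (real 0 \<cdot>\<^sub>v b)"
  proof (rule eq_vecI)
    fix i assume "i < dim_vec (0\<^sub>v d1 @\<^sub>v (real 0 \<cdot>\<^sub>v b))"
    then have "i < d1 + d2" using b by simp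
    then show "0\<^sub>v (d1 + d2) $ i = (0\<^sub>v d1 @\<^sub>v (real 0 \<cdot>\<^sub>v b)) $ i" using b by auto
  qed (use b in simp)
  finally show ?case by simp
next
  case (Suc n)
  let ?t = "dsum d1 d2 A (1\<^sub>m d2, b)"
  have "snd (epow (d1 + d2) ?t (Suc n)) = snd ?t + fst ?t *\<^sub>v (0\<^sub>v d1 @\<^sub>v (real n \<cdot>\<^sub>v b))"
    using Suc by (simp add: emult_def)
  also have "fst ?t *\<^sub>v (0\<^sub>v d1 @\<^sub>v (real n \<cdot>\<^sub>v b)) = 0\<^sub>v d1 @\<^sub>v (real n \<cdot>\<^sub>v b)"
  proof -
    have "fst ?t *\<^sub>v (0\<^sub>v d1 @\<^sub>v (real n \<cdot>\<^sub>v b)) = four_block_mat A (0\<^sub>m d1 d2) (0\<^sub>m d2 d1) (1\<^sub>m d2) *\<^sub>v (0\<^sub>v d1 @\<^sub>v (real n \<cdot>\<^sub>v b))"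
      by (simp add: dsum_def)
    also have "\<dots> = (A *\<^sub>v 0\<^sub>v d1 + 0\<^sub>m d1 d2 *\<^sub>v (real n \<cdot>\<^sub>v b)) @\<^sub>v (0\<^sub>m d2 d1 *\<^sub>v 0\<^sub>v d1 + 1\<^sub>m d2 *\<^sub>v (real n \<cdot>\<^sub>v b))"
      using A b by (intro four_block_mat_mult_vec) auto
    also have "\<dots> = 0\<^sub>v d1 @\<^sub>v (real n \<cdot>\<^sub>v b)" using A b by simp
    finally show ?thesis .
  qed
  also have "snd ?t + (0\<^sub>v d1 @\<^sub>v (real n \<cdot>\<^sub>v b)) = (0\<^sub>v d1 + 0\<^sub>v d1) @\<^sub>v (b + real n \<cdot>\<^sub>v b)"
    unfolding dsum_def snd_conv using b by (intro append_vec_add[of _ d1 _ _ d2]) auto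
  also have "b + real n \<cdot>\<^sub>v b = real (Suc n) \<cdot>\<^sub>v b"
  proof (rule eq_vecI)
    fix i assume "i < dim_vec (real (Suc n) \<cdot>\<^sub>v b)"
    then show "(b + real n \<cdot>\<^sub>v b) $ i = (real (Suc n) \<cdot>\<^sub>v b) $ i" using b by (simp add: ring_distribs)
  qed (use b in simp)
  finally show ?case by simp
qed

locale cor_setting =
  fixes d1 d2 d daff m0 :: nat
    and S G T R :: "euc set"
    and C :: "nat \<Rightarrow> euc set"
    and x0 :: "real vec"
  assumes d_def: "d = d1 + d2"
    and S_space: "space_group d2 S"
    and G_discrete: "discrete_esubgroup d G"
    and G_sub: "G \<subseteq> {dsum d1 d2 A s | A s. A \<in> orth_group d1 \<and> s \<in> S}"
    and G_onto: "\<forall>s\<in>S. \<exists>g\<in>G. eproj d1 d2 g = s"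
    and T_sub: "T \<subseteq> G"
    and T_bij: "bij_betw (eproj d1 d2) T (transl_sub d2 S)"
    and m0_pos: "m0 \<ge> 1"
    and TN_normal: "\<forall>N\<ge>1. enormal d (TNpow d T N) G \<longleftrightarrow> m0 dvd N"
    and C_reps: "\<forall>N\<in>periods m0. C N \<subseteq> G \<and> finite (C N) \<and>
                   (\<forall>g\<in>G. \<exists>!c. c \<in> C N \<and> (\<exists>t\<in>TNpow d T N. g = emult c t))"
    and x0_carrier: "x0 \<in> carrier_vec d"
    and x0_inj: "inj_on (\<lambda>g. eact g x0) G"
    and daff_def: "daff = affdim d ((\<lambda>g. eact g x0) ` G)"
    and orbit_zero: "\<forall>g\<in>G. \<forall>i<d - daff. eact g x0 $ i = 0"
    and G_trivial: "\<forall>g\<in>G. \<forall>y\<in>carrier_vec d. (\<forall>i. d - daff \<le> i \<and> i < d \<longrightarrow> y $ i = 0)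
                        \<longrightarrow> rot g *\<^sub>v y = y"
    and rot_finite: "finite (rot ` G)"
    and R_prop2: "property2 d x0 G R"
begin

lemma G_sg: "esubgroup d G" using G_discrete by (simp add: discrete_esubgroup_def)
lemma S_sg: "esubgroup d2 S" using S_space by (simp add: space_group_def discrete_esubgroup_def)
lemma G_eucl: "g \<in> G \<Longrightarrow> g \<in> eucl d" using sg_eucl[OF G_sg] .
lemma G_eid: "eid d \<in> G" using sg_eid[OF G_sg] .
lemma G_mult: "g \<in> G \<Longrightarrow> h \<in> G \<Longrightarrow> emult g h \<in> G" using sg_mult[OF G_sg] .
lemma G_inv: "g \<in> G \<Longrightarrow> einv g \<in> G" using sg_inv[OF G_sg] .
lemma G_rotc: "g \<in> G \<Longrightarrow> rot g \<in> carrier_mat d d" using eucl_rotc G_eucl by blast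
lemma G_rot: "g \<in> G \<Longrightarrow> rot g \<in> orth_group d" using eucl_rot G_eucl by blast
lemma G_snd: "g \<in> G \<Longrightarrow> snd g \<in> carrier_vec d" using eucl_snd G_eucl by blast
lemma G_rotTr: "g \<in> G \<Longrightarrow> (rot g)\<^sup>T * rot g = 1\<^sub>m d" using orth_left G_rot by blast
lemma G_rotrT: "g \<in> G \<Longrightarrow> rot g * (rot g)\<^sup>T = 1\<^sub>m d" using orth_right G_rot by blast
lemma rot_eid: "rot (eid d) = 1\<^sub>m d" by (simp add: rot_def eid_def)
lemma eact_eid: "x \<in> carrier_vec d \<Longrightarrow> eact (eid d) x = x" by (simp add: eact_def eid_def)
lemma eact_carrier: assumes g: "g \<in> G" and x: "x \<in> carrier_vec d" shows "eact g x \<in> carrier_vec d"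
  using G_rotc[OF g] G_snd[OF g] x unfolding eact_def rot_def by (intro add_carrier_vec) auto
lemma orbit_carrier: "g \<in> G \<Longrightarrow> eact g x0 \<in> carrier_vec d"
  using eact_carrier x0_carrier by blast
lemma G_assoc: "g \<in> G \<Longrightarrow> h \<in> G \<Longrightarrow> k \<in> G \<Longrightarrow> emult (emult g h) k = emult g (emult h k)"
  using emult_assoc G_eucl by blast
lemma G_eact_mult: "g \<in> G \<Longrightarrow> h \<in> G \<Longrightarrow> x \<in> carrier_vec d \<Longrightarrow> eact (emult g h) x = eact g (eact h x)"
  using eact_emult G_eucl by blast
lemma G_lid: "g \<in> G \<Longrightarrow> emult (eid d) g = g" using emult_eid_left G_eucl by blast
lemma G_rid: "g \<in> G \<Longrightarrow> emult g (eid d) = g" using emult_eid_right G_eucl by blast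
lemma G_linv: "g \<in> G \<Longrightarrow> emult (einv g) g = eid d" using einv_left G_eucl by blast
lemma G_rinv: "g \<in> G \<Longrightarrow> emult g (einv g) = eid d" using einv_right G_eucl by blast
lemma G_invinv: "g \<in> G \<Longrightarrow> einv (einv g) = g" using einv_einv G_eucl by blast

lemma S_eucl: "s \<in> S \<Longrightarrow> s \<in> eucl d2" using sg_eucl[OF S_sg] .

lemma G_form: assumes "g \<in> G"
  shows "\<exists>A B b. g = dsum d1 d2 A (B, b) \<and> A \<in> orth_group d1 \<and> (B, b) \<in> S
     \<and> A \<in> carrier_mat d1 d1 \<and> B \<in> carrier_mat d2 d2 \<and> b \<in> carrier_vec d2"
proof -
  obtain A s where "g = dsum d1 d2 A s" "A \<in> orth_group d1" "s \<in> S" using G_sub assms by blast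
  moreover have "fst s \<in> carrier_mat d2 d2" "snd s \<in> carrier_vec d2"
    using S_eucl[OF \<open>s \<in> S\<close>] eucl_fst eucl_snd by auto
  ultimately show ?thesis using orth_carrier by (metis prod.collapse)
qed

lemma T_form: assumes "t \<in> T"
  shows "\<exists>A b. t = dsum d1 d2 A (1\<^sub>m d2, b) \<and> A \<in> carrier_mat d1 d1 \<and> b \<in> carrier_vec d2
    \<and> (1\<^sub>m d2, b) \<in> transl_sub d2 S"
proof -
  obtain A B b where g: "t = dsum d1 d2 A (B, b)" "A \<in> carrier_mat d1 d1" "B \<in> carrier_mat d2 d2" "b \<in> carrier_vec d2"
    using G_form T_sub assms by blast
  have "eproj d1 d2 t \<in> transl_sub d2 S" using T_bij assms by (auto simp: bij_betw_def)
  moreover have "eproj d1 d2 t = (B, b)" using g eproj_dsum by simp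
  ultimately have "B = 1\<^sub>m d2" "(B, b) \<in> transl_sub d2 S" by (auto simp: transl_sub_def rot_def)
  then show ?thesis using g by blast
qed

lemma epow_T_snd: assumes "t \<in> T"
  shows "\<exists>b. b \<in> carrier_vec d2 \<and> (1\<^sub>m d2, b) \<in> transl_sub d2 S \<and>
     (\<forall>n. snd (epow d t n) = 0\<^sub>v d1 @\<^sub>v (real n \<cdot>\<^sub>v b))"
  using T_form[OF assms] epow_transl_snd d_def by metis

lemma epow_G: "g \<in> G \<Longrightarrow> epow d g k \<in> G" using sg_epow[OF G_sg] .

definition Kf :: nat where "Kf = fact (card (rot ` G))"

lemma rot_epow_add: "g \<in> G \<Longrightarrow> rot (epow d g (a + b)) = rot (epow d g a) * rot (epow d g b)"
  using epow_add[OF G_sg] rot_emult by metis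

lemma rot_period: assumes g: "g \<in> G"
  shows "\<exists>m. 1 \<le> m \<and> m \<le> card (rot ` G) \<and> rot (epow d g m) = 1\<^sub>m d"
proof -
  let ?F = "rot ` G"
  let ?f = "\<lambda>i. rot (epow d g i)"
  have "?f ` {0..card ?F} \<subseteq> ?F" using epow_G[OF g] by auto
  then have "card (?f ` {0..card ?F}) \<le> card ?F" using rot_finite card_mono by blast
  then have "card (?f ` {0..card ?F}) < card {0..card ?F}" by simp
  then have "\<not> inj_on ?f {0..card ?F}" using pigeonhole by blast
  then obtain i j where ij: "i \<in> {0..card ?F}" "j \<in> {0..card ?F}" "i \<noteq> j" "?f i = ?f j"
    unfolding inj_on_def by blast
  then obtain i j where ij: "i < j" "j \<le> card ?F" "?f i = ?f j"
    by (metis atLeastAtMost_iff linorder_neqE_nat)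
  have eq: "?f (j - i) * ?f i = ?f i" using rot_epow_add[OF g, of "j - i" i] ij by simp
  have c1: "?f (j - i) \<in> carrier_mat d d" "?f i \<in> carrier_mat d d" using G_rotc epow_G g by auto
  have "?f (j - i) = ?f (j - i) * (?f i * (?f i)\<^sup>T)" using G_rotrT[OF epow_G[OF g]] c1 by simp
  also have "\<dots> = (?f (j - i) * ?f i) * (?f i)\<^sup>T" using c1 by (simp add: assoc_mult_mat[of _ d d _ d _ d])
  also have "\<dots> = 1\<^sub>m d" using eq G_rotrT[OF epow_G[OF g]] by simp
  finally show ?thesis using ij by (intro exI[of _ "j - i"]) auto
qed

lemma rot_epow_one: assumes g: "g \<in> G" and r: "rot g = 1\<^sub>m d"
  shows "rot (epow d g q) = 1\<^sub>m d"
proof (induction q)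
  case 0 then show ?case by (simp add: rot_eid)
next
  case (Suc q) then show ?case using r by (simp add: rot_emult)
qed

lemma rot_epow_Kf: assumes g: "g \<in> G" and dv: "Kf dvd N"
  shows "rot (epow d g N) = 1\<^sub>m d"
proof -
  obtain m where m: "1 \<le> m" "m \<le> card (rot ` G)" "rot (epow d g m) = 1\<^sub>m d" using rot_period[OF g] by blast
  have "m dvd Kf" unfolding Kf_def using m by (simp add: dvd_fact)
  then obtain q where "N = m * q" using dv by (metis dvd_trans dvdE)
  then have "epow d g N = epow d (epow d g m) q" using epow_mult[OF G_sg g] by simp
  then show ?thesis using rot_epow_one[OF epow_G[OF g] m(3)] by simp
qed

lemma Kf_pos: "Kf \<ge> 1" unfolding Kf_def by simp

end

context cor_setting begin

lemma prop2_unpack: "\<exists>R' R''. R' \<subseteq> G \<and> eid d \<in> R' \<and> egen d R' = G \<and> property1 d x0 G R'' \<and>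
        {emult g h | g h. g \<in> R' \<and> h \<in> R''} \<subseteq> R"
  using R_prop2 by (auto simp: property2_def)
lemma R_G: "R \<subseteq> G" using R_prop2 by (auto simp: property2_def)
lemma R_fin: "finite R" using R_prop2 by (auto simp: property2_def)

definition R1 where "R1 = (SOME R'. \<exists>R''. R' \<subseteq> G \<and> eid d \<in> R' \<and> egen d R' = G \<and> property1 d x0 G R'' \<and>
        {emult g h | g h. g \<in> R' \<and> h \<in> R''} \<subseteq> R)"
definition R2 where "R2 = (SOME R''. R1 \<subseteq> G \<and> eid d \<in> R1 \<and> egen d R1 = G \<and> property1 d x0 G R'' \<and>
        {emult g h | g h. g \<in> R1 \<and> h \<in> R''} \<subseteq> R)"

lemma R12: "R1 \<subseteq> G \<and> eid d \<in> R1 \<and> egen d R1 = G \<and> property1 d x0 G R2 \<and>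
        {emult g h | g h. g \<in> R1 \<and> h \<in> R2} \<subseteq> R"
proof -
  have "\<exists>R''. R1 \<subseteq> G \<and> eid d \<in> R1 \<and> egen d R1 = G \<and> property1 d x0 G R'' \<and>
        {emult g h | g h. g \<in> R1 \<and> h \<in> R''} \<subseteq> R"
    unfolding R1_def using someI_ex[OF prop2_unpack] .
  then show ?thesis unfolding R2_def by (rule someI_ex)
qed

lemma R1_G: "R1 \<subseteq> G" using R12 by blast
lemma R1_eid: "eid d \<in> R1" using R12 by blast
lemma R1_gen: "egen d R1 = G" using R12 by blast
lemma R2_G: "R2 \<subseteq> G" using R12 by (simp add: property1_def)
lemma R2_eid: "eid d \<in> R2" using R12 by (simp add: property1_def)
lemma R2_aff: "affhull d ((\<lambda>g. eact g x0) ` R2) = affhull d ((\<lambda>g. eact g x0) ` G)"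
  using R12 by (simp add: property1_def)
lemma R12_R: "g \<in> R1 \<Longrightarrow> h \<in> R2 \<Longrightarrow> emult g h \<in> R" using R12 by blast
lemma R2_R: assumes h: "h \<in> R2" shows "h \<in> R"
proof -
  have "h \<in> G" using h R2_G by blast
  then show ?thesis using R12_R[OF R1_eid h] G_lid by simp
qed
lemma R_eid: "eid d \<in> R" using R2_R R2_eid by blast

lemma x0_eq: "eact (eid d) x0 = x0" using eact_eid x0_carrier by blast

lemma orbit_E: "g \<in> G \<Longrightarrow> i < d - daff \<Longrightarrow> eact g x0 $ i = 0" using orbit_zero by blast
lemma x0_E: "i < d - daff \<Longrightarrow> x0 $ i = 0" using orbit_E[OF G_eid] x0_eq by simp

definition Pk :: "nat \<Rightarrow> bool" where
  "Pk k = (\<exists>p\<in>(\<lambda>g. eact g x0) ` G. \<exists>qs. set qs \<subseteq> (\<lambda>g. eact g x0) ` G \<and> length qs = k \<and>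
                    lin_indep_vecs d (map (\<lambda>q. q - p) qs))"

lemma daff_Greatest: "daff = Greatest Pk"
  unfolding daff_def affdim_def Pk_def by simp

lemma Pk_bound: "Pk k \<Longrightarrow> k \<le> d"
  unfolding Pk_def using LA_bound by fastforce

lemma Pk_d2: "Pk d2"
proof -
  obtain ts where ts: "set ts \<subseteq> transl_sub d2 S" "length ts = d2" "lin_indep_vecs d2 (map snd ts)"
    using S_space by (auto simp: space_group_def)
  have "\<forall>i<d2. \<exists>t\<in>T. eproj d1 d2 t = ts ! i"
  proof (intro allI impI)
    fix i assume "i < d2"
    then have "ts ! i \<in> transl_sub d2 S" using ts by auto
    then have "ts ! i \<in> eproj d1 d2 ` T" using T_bij by (simp add: bij_betw_def)
    then show "\<exists>t\<in>T. eproj d1 d2 t = ts ! i" by (metis imageE)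
  qed
  then obtain tt where tt: "\<And>i. i < d2 \<Longrightarrow> tt i \<in> T \<and> eproj d1 d2 (tt i) = ts ! i" by metis
  have comp: "(eact (tt i) x0 - x0) $ (d1 + j) = snd (ts ! i) $ j" if i: "i < d2" and j: "j < d2" for i j
  proof -
    obtain A b where t: "tt i = dsum d1 d2 A (1\<^sub>m d2, b)" "A \<in> carrier_mat d1 d1" "b \<in> carrier_vec d2"
      using T_form tt[OF i] by blast
    have "ts ! i = (1\<^sub>m d2, b)" using tt[OF i] t eproj_dsum by simp
    have x0c: "x0 \<in> carrier_vec (d1 + d2)" using x0_carrier d_def by simp
    have "fst (tt i) *\<^sub>v x0 = (A *\<^sub>v vec_first x0 d1) @\<^sub>v (1\<^sub>m d2 *\<^sub>v vec_last x0 d2)"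
      using t dsum_mv[OF t(2) _ x0c] by simp
    then have "(fst (tt i) *\<^sub>v x0) $ (d1 + j) = x0 $ (d1 + j)"
      using j t x0c by (simp add: vec_last_def)
    moreover have "snd (tt i) $ (d1 + j) = b $ j" using t j by (simp add: dsum_def)
    moreover have "fst (tt i) \<in> carrier_mat d d" using t d_def by (simp add: dsum_def)
    moreover have "snd (tt i) \<in> carrier_vec d" using t d_def by (simp add: dsum_def)
    moreover have "d1 + j < d" using j d_def by simp
    ultimately have "(eact (tt i) x0 - x0) $ (d1 + j) = b $ j"
      using x0_carrier by (simp add: eact_def)
    then show ?thesis using \<open>ts ! i = (1\<^sub>m d2, b)\<close> by simp
  qed
  define qs where "qs = map (\<lambda>i. eact (tt i) x0) [0..<d2]"
  have "\<forall>i<d2. eact (tt i) x0 \<in> (\<lambda>g. eact g x0) ` G" using tt T_sub by blast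
  then have "set qs \<subseteq> (\<lambda>g. eact g x0) ` G" by (auto simp: qs_def)
  moreover have "lin_indep_vecs d (map (\<lambda>q. q - x0) qs)"
    unfolding lin_indep_vecs_def
  proof (intro allI impI)
    fix c :: "nat \<Rightarrow> real" and i
    assume h: "\<forall>j<d. (\<Sum>i<length (map (\<lambda>q. q - x0) qs). c i * map (\<lambda>q. q - x0) qs ! i $ j) = 0"
      and i: "i < length (map (\<lambda>q. q - x0) qs)"
    have "\<forall>j<d2. (\<Sum>i<length (map snd ts). c i * map snd ts ! i $ j) = 0"
    proof (intro allI impI)
      fix j assume j: "j < d2"
      have "(\<Sum>i<length (map snd ts). c i * map snd ts ! i $ j) =
         (\<Sum>i<length (map (\<lambda>q. q - x0) qs). c i * map (\<lambda>q. q - x0) qs ! i $ (d1 + j))"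
        using ts comp j by (intro sum.cong) (auto simp: qs_def)
      also have "\<dots> = 0" using h j d_def by simp
      finally show "(\<Sum>i<length (map snd ts). c i * map snd ts ! i $ j) = 0" .
    qed
    then show "c i = 0" using ts(3) i ts(2) unfolding lin_indep_vecs_def by (simp add: qs_def)
  qed
  moreover have "length qs = d2" by (simp add: qs_def)
  moreover have "x0 \<in> (\<lambda>g. eact g x0) ` G" using x0_eq G_eid by force
  ultimately show ?thesis unfolding Pk_def by blast
qed

lemma daff_props: "Pk daff" "d2 \<le> daff" "daff \<le> d"
proof -
  show "Pk daff" unfolding daff_Greatest using GreatestI_nat[where P=Pk and k=d2 and b=d, OF Pk_d2 Pk_bound] .
  show "d2 \<le> daff" unfolding daff_Greatest using Greatest_le_nat[where P=Pk and k=d2 and b=d, OF Pk_d2 Pk_bound] .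
  show "daff \<le> d" using Pk_bound[OF \<open>Pk daff\<close>] .
qed

lemma dims: "(d - daff) + (daff - d2) = d1" using daff_props d_def by simp

definition inspan :: "real vec \<Rightarrow> bool" where
  "inspan y = (\<exists>\<beta>. \<forall>j<d. y $ j = (\<Sum>h\<in>R. \<beta> h * (eact h x0 - x0) $ j))"

lemma inspan_comb:
  assumes I: "finite I" and v: "\<forall>i\<in>I. inspan (v i)" and y: "\<forall>j<d. y $ j = (\<Sum>i\<in>I. c i * v i $ j)"
  shows "inspan y"
proof -
  from v have "\<forall>i\<in>I. \<exists>\<beta>. \<forall>j<d. v i $ j = (\<Sum>h\<in>R. \<beta> h * (eact h x0 - x0) $ j)"
    unfolding inspan_def by blast
  from bchoice[OF this] obtain B where B: "\<forall>i\<in>I. \<forall>j<d. v i $ j = (\<Sum>h\<in>R. B i h * (eact h x0 - x0) $ j)"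
    by blast
  show ?thesis unfolding inspan_def
  proof (intro exI[of _ "\<lambda>h. \<Sum>i\<in>I. c i * B i h"] allI impI)
    fix j assume j: "j < d"
    have "y $ j = (\<Sum>i\<in>I. c i * v i $ j)" using y j by blast
    also have "\<dots> = (\<Sum>i\<in>I. c i * (\<Sum>h\<in>R. B i h * (eact h x0 - x0) $ j))"
      using B j by (intro sum.cong) auto
    also have "\<dots> = (\<Sum>i\<in>I. \<Sum>h\<in>R. c i * B i h * (eact h x0 - x0) $ j)"
      by (simp add: sum_distrib_left mult.assoc)
    also have "\<dots> = (\<Sum>h\<in>R. \<Sum>i\<in>I. c i * B i h * (eact h x0 - x0) $ j)" by (rule sum.swap)
    also have "\<dots> = (\<Sum>h\<in>R. (\<Sum>i\<in>I. c i * B i h) * (eact h x0 - x0) $ j)"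
      by (simp add: sum_distrib_right)
    finally show "y $ j = (\<Sum>h\<in>R. (\<Sum>i\<in>I. c i * B i h) * (eact h x0 - x0) $ j)" .
  qed
qed

lemma inspan_diff:
  assumes "inspan a" "inspan b" "\<forall>j<d. y $ j = a $ j - b $ j"
  shows "inspan y"
proof -
  obtain \<alpha> where a: "\<forall>j<d. a $ j = (\<Sum>h\<in>R. \<alpha> h * (eact h x0 - x0) $ j)"
    using assms(1) unfolding inspan_def by blast
  obtain \<beta> where b: "\<forall>j<d. b $ j = (\<Sum>h\<in>R. \<beta> h * (eact h x0 - x0) $ j)"
    using assms(2) unfolding inspan_def by blast
  note ab = a b
  show ?thesis unfolding inspan_def
  proof (intro exI[of _ "\<lambda>h. \<alpha> h - \<beta> h"] allI impI)
    fix j assume j: "j < d"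
    have "y $ j = a $ j - b $ j" using assms(3) j by blast
    also have "\<dots> = (\<Sum>h\<in>R. \<alpha> h * (eact h x0 - x0) $ j) - (\<Sum>h\<in>R. \<beta> h * (eact h x0 - x0) $ j)"
      using ab j by presburger
    also have "\<dots> = (\<Sum>h\<in>R. (\<alpha> h - \<beta> h) * (eact h x0 - x0) $ j)"
      by (simp only: sum_subtractf[symmetric] left_diff_distrib)
    finally show "y $ j = (\<Sum>h\<in>R. (\<alpha> h - \<beta> h) * (eact h x0 - x0) $ j)" .
  qed
qed

lemma inspan_orbit: assumes g: "g \<in> G" shows "inspan (eact g x0 - x0)"
proof -
  let ?q = "eact g x0"
  have "finite {?q} \<and> {?q} \<noteq> {} \<and> {?q} \<subseteq> (\<lambda>g. eact g x0) ` G \<and> sum (\<lambda>_. 1::real) {?q} = 1 \<and>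
     (\<forall>j<d. ?q $ j = (\<Sum>x\<in>{?q}. 1 * x $ j))" using g by auto
  then have "?q \<in> affhull d ((\<lambda>g. eact g x0) ` G)"
    unfolding affhull_def using orbit_carrier[OF g] by blast
  then have "?q \<in> affhull d ((\<lambda>g. eact g x0) ` R2)" using R2_aff by simp
  then have "\<exists>F c. finite F \<and> F \<noteq> {} \<and> F \<subseteq> (\<lambda>g. eact g x0) ` R2 \<and> sum c F = 1 \<and>
      (\<forall>j<d. ?q $ j = (\<Sum>x\<in>F. c x * x $ j))"
    unfolding affhull_def mem_Collect_eq by (rule conjunct2)
  then obtain F c where F0: "finite F \<and> F \<noteq> {} \<and> F \<subseteq> (\<lambda>g. eact g x0) ` R2 \<and> sum c F = 1 \<and>
      (\<forall>j<d. ?q $ j = (\<Sum>x\<in>F. c x * x $ j))" by blast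
  then have F: "finite F" "F \<subseteq> (\<lambda>g. eact g x0) ` R2" "sum c F = 1"
    "\<forall>j<d. ?q $ j = (\<Sum>x\<in>F. c x * x $ j)" by auto
  define H0 where "H0 = {h \<in> R. h \<in> R2 \<and> eact h x0 \<in> F}"
  have bij: "bij_betw (\<lambda>h. eact h x0) H0 F"
  proof -
    have "H0 \<subseteq> G" using R_G by (auto simp: H0_def)
    then have "inj_on (\<lambda>h. eact h x0) H0" using inj_on_subset[OF x0_inj] by blast
    moreover have "(\<lambda>h. eact h x0) ` H0 = F" using F(2) R2_R by (auto simp: H0_def)
    ultimately show ?thesis by (simp add: bij_betw_def)
  qed
  show ?thesis unfolding inspan_def
  proof (intro exI[of _ "\<lambda>h. if h \<in> R2 \<and> eact h x0 \<in> F then c (eact h x0) else 0"] allI impI)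
    fix j assume j: "j < d"
    have "(\<Sum>h\<in>R. (if h \<in> R2 \<and> eact h x0 \<in> F then c (eact h x0) else 0) * (eact h x0 - x0) $ j)
        = (\<Sum>h\<in>R. if h \<in> R2 \<and> eact h x0 \<in> F then c (eact h x0) * (eact h x0 - x0) $ j else 0)"
      by (intro sum.cong) auto
    also have "\<dots> = (\<Sum>h\<in>H0. c (eact h x0) * (eact h x0 - x0) $ j)"
      unfolding H0_def by (rule sum.inter_filter[symmetric, OF R_fin])
    also have "\<dots> = (\<Sum>x\<in>F. c x * (x - x0) $ j)"
      using sum.reindex_bij_betw[OF bij, of "\<lambda>x. c x * (x - x0) $ j"] by simp
    also have "\<dots> = (\<Sum>x\<in>F. c x * x $ j - c x * x0 $ j)"
    proof (intro sum.cong refl)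
      fix x assume "x \<in> F"
      then obtain h where "h \<in> R2" "x = eact h x0" using F(2) by blast
      then have "x \<in> carrier_vec d" using R2_G orbit_carrier by blast
      then show "c x * (x - x0) $ j = c x * x $ j - c x * x0 $ j" using j x0_carrier by (simp add: right_diff_distrib)
    qed
    also have "\<dots> = ?q $ j - x0 $ j" using F j by (simp add: sum_subtractf sum_distrib_right[symmetric])
    also have "\<dots> = (?q - x0) $ j" using j x0_carrier by simp
    finally show "(?q - x0) $ j = (\<Sum>h\<in>R. (if h \<in> R2 \<and> eact h x0 \<in> F then c (eact h x0) else 0) * (eact h x0 - x0) $ j)"
      by simp
  qed
qed

lemma span_E: assumes y: "\<forall>j<d - daff. y $ j = 0" shows "inspan y"
proof -
  obtain p qs where pq: "p \<in> (\<lambda>g. eact g x0) ` G" "set qs \<subseteq> (\<lambda>g. eact g x0) ` G" "length qs = daff"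
     "lin_indep_vecs d (map (\<lambda>q. q - p) qs)"
    using daff_props(1) unfolding Pk_def by blast
  let ?vs = "map (\<lambda>q. q - p) qs"
  have orbE: "\<forall>v\<in>set ?vs. \<forall>j<d - daff. v $ j = 0"
  proof (intro ballI allI impI)
    fix v j assume v: "v \<in> set ?vs" and j: "j < d - daff"
    then obtain q where q: "q \<in> set qs" "v = q - p" by auto
    obtain g where g: "g \<in> G" "q = eact g x0" using q pq by auto
    obtain g' where g': "g' \<in> G" "p = eact g' x0" using pq by auto
    have c: "eact g x0 \<in> carrier_vec d" "eact g' x0 \<in> carrier_vec d" using g g' orbit_carrier by auto
    have "j < d" using j by simp
    then show "v $ j = 0" using q g g' orbit_E[OF g(1) j] orbit_E[OF g'(1) j] c by simp
  qed
  have len: "length ?vs + (d - daff) = d" using pq daff_props by simp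
  obtain c where c: "\<forall>j. d - daff \<le> j \<and> j < d \<longrightarrow> y $ j = (\<Sum>i<length ?vs. c i * ?vs ! i $ j)"
    using LA_span[OF pq(4) len orbE] by blast
  have all: "\<forall>j<d. y $ j = (\<Sum>i\<in>{..<length ?vs}. c i * ?vs ! i $ j)"
  proof (intro allI impI)
    fix j assume j: "j < d"
    show "y $ j = (\<Sum>i\<in>{..<length ?vs}. c i * ?vs ! i $ j)"
    proof (cases "j < d - daff")
      case True
      then show ?thesis using y orbE by (auto intro!: sum.neutral)
    next
      case False then show ?thesis using c j by simp
    qed
  qed
  have ins: "\<forall>i\<in>{..<length ?vs}. inspan (?vs ! i)"
  proof
    fix i assume i: "i \<in> {..<length ?vs}"
    have "qs ! i \<in> set qs" using i by simp
    then have "qs ! i \<in> (\<lambda>g. eact g x0) ` G" using pq(2) by blast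
    then obtain g where g: "g \<in> G" "qs ! i = eact g x0" by blast
    obtain g' where g': "g' \<in> G" "p = eact g' x0" using pq by auto
    have c: "eact g x0 \<in> carrier_vec d" "eact g' x0 \<in> carrier_vec d" using g g' orbit_carrier by auto
    have vi: "?vs ! i = eact g x0 - eact g' x0" using i g g' by simp
    show "inspan (?vs ! i)"
    proof (rule inspan_diff[OF inspan_orbit[OF g(1)] inspan_orbit[OF g'(1)]], intro allI impI)
      fix j assume j: "j < d"
      show "(?vs ! i) $ j = (eact g x0 - x0) $ j - (eact g' x0 - x0) $ j"
        unfolding vi using c j x0_carrier by simp
    qed
  qed
  show ?thesis by (rule inspan_comb[OF _ ins all]) simp
qed

end

context cor_setting begin

abbreviation "d3 \<equiv> d - daff"

definition beta :: "nat \<Rightarrow> euc \<Rightarrow> real" where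
  "beta j = (SOME \<beta>. \<forall>l<d. unit_vec d j $ l = (\<Sum>h\<in>R. \<beta> h * (eact h x0 - x0) $ l))"

lemma beta_prop: assumes j: "d3 \<le> j" "j < d"
  shows "\<forall>l<d. unit_vec d j $ l = (\<Sum>h\<in>R. beta j h * (eact h x0 - x0) $ l)"
proof -
  have "\<forall>l<d3. unit_vec d j $ l = 0" using j by auto
  then have "inspan (unit_vec d j)" by (rule span_E)
  then show ?thesis unfolding inspan_def beta_def by (rule someI_ex)
qed

definition Wf :: "(euc \<Rightarrow> real vec) \<Rightarrow> euc \<Rightarrow> nat \<Rightarrow> real" where
  "Wf w h i = (\<Sum>l<d. rot h $$ (i, l) * w h $ l)"
definition Lf :: "(euc \<Rightarrow> real vec) \<Rightarrow> nat \<Rightarrow> nat \<Rightarrow> real" where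
  "Lf w j i = (\<Sum>h\<in>R. beta j h * (Wf w h i - Wf w (eid d) i))"
definition C1 :: "(euc \<Rightarrow> real vec) \<Rightarrow> bool" where
  "C1 w = (\<forall>h\<in>R. \<forall>i<d. Wf w h i - Wf w (eid d) i = (\<Sum>l\<in>{d3..<d}. (eact h x0 - x0) $ l * Lf w l i))"
definition C2 :: "(euc \<Rightarrow> real vec) \<Rightarrow> bool" where
  "C2 w = (\<forall>i\<in>{d3..<d}. \<forall>j\<in>{d3..<d}. Lf w j i + Lf w i j = 0)"

lemma Wf_eq: "w h \<in> carrier_vec d \<Longrightarrow> h \<in> G \<Longrightarrow> i < d \<Longrightarrow> Wf w h i = (rot h *\<^sub>v w h) $ i"
  unfolding Wf_def using mv_index[OF G_rotc] by simp

lemma z_E: "h \<in> G \<Longrightarrow> l < d3 \<Longrightarrow> (eact h x0 - x0) $ l = 0"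
  using orbit_E x0_E orbit_carrier x0_carrier by simp

lemma sum_split_d3: "(\<Sum>l<d. f l) = (\<Sum>l<d3. f l) + (\<Sum>l\<in>{d3..<d}. f l)"
proof -
  have eq: "{..<d} = {..<d3} \<union> {d3..<d}" by auto
  have "(\<Sum>l<d. f l) = sum f ({..<d3} \<union> {d3..<d})" by (simp only: eq)
  also have "\<dots> = sum f {..<d3} + sum f {d3..<d}" by (rule sum.union_disjoint) auto
  finally show ?thesis .
qed

lemma sum_E: assumes h: "h \<in> G"
  shows "(\<Sum>l<d. f l * (eact h x0 - x0) $ l) = (\<Sum>l\<in>{d3..<d}. f l * (eact h x0 - x0) $ l)"
  using sum_split_d3[of "\<lambda>l. f l * (eact h x0 - x0) $ l"] z_E[OF h] by simp

lemma Uchar1: assumes w: "w \<in> U_iso d x0 R" shows "C1 w \<and> C2 w"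
proof -
  obtain a S where aS: "a \<in> carrier_vec d" "S \<in> skew d"
    "\<forall>h\<in>R. rot h *\<^sub>v w h = a + S *\<^sub>v (eact h x0 - x0)" and wc: "\<forall>h\<in>R. w h \<in> carrier_vec d"
    using w unfolding U_iso_def by blast
  have Sc: "S \<in> carrier_mat d d" and ST: "S\<^sup>T = - S" using aS(2) by (auto simp: skew_def)
  have W: "Wf w h i = a $ i + (\<Sum>l<d. S $$ (i, l) * (eact h x0 - x0) $ l)" if h: "h \<in> R" and i: "i < d" for h i
  proof -
    have hG: "h \<in> G" using h R_G by blast
    have zc: "eact h x0 - x0 \<in> carrier_vec d" using orbit_carrier[OF hG] x0_carrier by simp
    have "Wf w h i = (a + S *\<^sub>v (eact h x0 - x0)) $ i" using Wf_eq[OF _ hG i] wc h aS(3) by simp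
    also have "\<dots> = a $ i + (S *\<^sub>v (eact h x0 - x0)) $ i" using aS(1) Sc zc i by simp
    also have "(S *\<^sub>v (eact h x0 - x0)) $ i = (\<Sum>l<d. S $$ (i, l) * (eact h x0 - x0) $ l)"
      using mv_index[OF Sc zc i] .
    finally show ?thesis .
  qed
  have D: "Wf w h i - Wf w (eid d) i = (\<Sum>l<d. S $$ (i, l) * (eact h x0 - x0) $ l)"
    if h: "h \<in> R" and i: "i < d" for h i
  proof -
    have "(\<Sum>l<d. S $$ (i, l) * (eact (eid d) x0 - x0) $ l) = 0"
      using x0_eq x0_carrier by (intro sum.neutral) auto
    then show ?thesis using W[OF h i] W[OF R_eid i] by simp
  qed
  have L: "Lf w j i = S $$ (i, j)" if j: "d3 \<le> j" "j < d" and i: "i < d" for i j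
  proof -
    have "Lf w j i = (\<Sum>h\<in>R. beta j h * (\<Sum>l<d. S $$ (i, l) * (eact h x0 - x0) $ l))"
      unfolding Lf_def using D i by (intro sum.cong) auto
    also have "\<dots> = (\<Sum>h\<in>R. \<Sum>l<d. S $$ (i, l) * (beta j h * (eact h x0 - x0) $ l))"
      by (simp add: sum_distrib_left mult.left_commute)
    also have "\<dots> = (\<Sum>l<d. \<Sum>h\<in>R. S $$ (i, l) * (beta j h * (eact h x0 - x0) $ l))" by (rule sum.swap)
    also have "\<dots> = (\<Sum>l<d. S $$ (i, l) * unit_vec d j $ l)"
      using beta_prop[OF j] by (simp add: sum_distrib_left[symmetric])
    also have "\<dots> = (\<Sum>l<d. if l = j then S $$ (i, l) else 0)" using j by (intro sum.cong) auto
    also have "\<dots> = S $$ (i, j)" using j by simp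
    finally show ?thesis .
  qed
  have "C1 w" unfolding C1_def
  proof (intro ballI allI impI)
    fix h i assume h: "h \<in> R" and i: "i < d"
    have hG: "h \<in> G" using h R_G by blast
    have "Wf w h i - Wf w (eid d) i = (\<Sum>l\<in>{d3..<d}. S $$ (i, l) * (eact h x0 - x0) $ l)"
      using D[OF h i] sum_E[OF hG] by simp
    also have "\<dots> = (\<Sum>l\<in>{d3..<d}. (eact h x0 - x0) $ l * Lf w l i)"
      using L i by (intro sum.cong) auto
    finally show "Wf w h i - Wf w (eid d) i = (\<Sum>l\<in>{d3..<d}. (eact h x0 - x0) $ l * Lf w l i)" .
  qed
  moreover have "C2 w" unfolding C2_def
  proof (intro ballI)
    fix i j assume i: "i \<in> {d3..<d}" and j: "j \<in> {d3..<d}"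
    have "S\<^sup>T $$ (j, i) = (- S) $$ (j, i)" using ST by simp
    then have "S $$ (i, j) = - S $$ (j, i)" using Sc i j by simp
    then show "Lf w j i + Lf w i j = 0" using L i j by simp
  qed
  ultimately show ?thesis by blast
qed

lemma Uchar2: assumes we: "w \<in> extensional R" and wc: "\<forall>h\<in>R. w h \<in> carrier_vec d"
  and c1: "C1 w" and c2: "C2 w"
  shows "w \<in> U_iso d x0 R"
proof -
  define a where "a = vec d (\<lambda>i. Wf w (eid d) i)"
  define S where "S = mat d d (\<lambda>(i, j). if d3 \<le> j then Lf w j i else if d3 \<le> i then - Lf w i j else 0)"
  have ac: "a \<in> carrier_vec d" by (simp add: a_def)
  have Sc: "S \<in> carrier_mat d d" by (simp add: S_def)
  have "S\<^sup>T = - S"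
  proof (rule eq_matI)
    fix i j assume i: "i < dim_row (- S)" and j: "j < dim_col (- S)"
    then have i': "i < d" and j': "j < d" using Sc by auto
    show "S\<^sup>T $$ (i, j) = (- S) $$ (i, j)"
    proof (cases "d3 \<le> i \<and> d3 \<le> j")
      case True
      then have "Lf w j i + Lf w i j = 0" using c2 i' j' unfolding C2_def by auto
      then show ?thesis using True i' j' by (simp add: S_def)
    next
      case False
      then show ?thesis using i' j' by (auto simp: S_def)
    qed
  qed (use Sc in auto)
  then have Ss: "S \<in> skew d" using Sc by (simp add: skew_def)
  have eq: "rot h *\<^sub>v w h = a + S *\<^sub>v (eact h x0 - x0)" if h: "h \<in> R" for h
  proof (rule eq_vecI)
    have hG: "h \<in> G" using h R_G by blast
    have zc: "eact h x0 - x0 \<in> carrier_vec d" using orbit_carrier[OF hG] x0_carrier by simp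
    fix i assume "i < dim_vec (a + S *\<^sub>v (eact h x0 - x0))"
    then have i: "i < d" using ac Sc by simp
    have "(a + S *\<^sub>v (eact h x0 - x0)) $ i = a $ i + (\<Sum>l<d. S $$ (i, l) * (eact h x0 - x0) $ l)"
      using ac Sc zc i mv_index[OF Sc zc i] by simp
    also have "(\<Sum>l<d. S $$ (i, l) * (eact h x0 - x0) $ l) = (\<Sum>l\<in>{d3..<d}. S $$ (i, l) * (eact h x0 - x0) $ l)"
      using sum_E[OF hG] .
    also have "\<dots> = (\<Sum>l\<in>{d3..<d}. (eact h x0 - x0) $ l * Lf w l i)"
      using i by (intro sum.cong) (auto simp: S_def)
    also have "\<dots> = Wf w h i - Wf w (eid d) i" using c1 h i unfolding C1_def by simp
    finally show "(rot h *\<^sub>v w h) $ i = (a + S *\<^sub>v (eact h x0 - x0)) $ i"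
      using Wf_eq[OF _ hG i] wc h i by (simp add: a_def)
  next
    show "dim_vec (rot h *\<^sub>v w h) = dim_vec (a + S *\<^sub>v (eact h x0 - x0))"
    proof -
      have "rot h \<in> carrier_mat d d" using G_rotc h R_G by blast
      then show ?thesis using Sc ac by simp
    qed
  qed
  show ?thesis unfolding U_iso_def using we wc ac Ss eq by blast
qed

definition lipf :: "((euc \<Rightarrow> real vec) \<Rightarrow> real) \<Rightarrow> bool" where
  "lipf F = (\<exists>M. \<forall>w w'. (\<forall>h\<in>R. w h \<in> carrier_vec d \<and> w' h \<in> carrier_vec d) \<longrightarrow>
      \<bar>F w - F w'\<bar> \<le> M * fdist R w w')"

lemma sp_nonneg: "0 \<le> (v :: real vec) \<bullet> v"
  unfolding scalar_prod_def by (intro sum_nonneg) auto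

lemma fdist_nonneg: "0 \<le> fdist R w w'"
  unfolding fdist_def using sp_nonneg by (simp add: sum_nonneg)

lemma lip_coord: assumes h: "h \<in> R" and i: "i < d" shows "lipf (\<lambda>w. w h $ i)"
  unfolding lipf_def
proof (intro exI[of _ 1] allI impI)
  fix w w' :: "euc \<Rightarrow> real vec"
  assume c: "\<forall>h\<in>R. w h \<in> carrier_vec d \<and> w' h \<in> carrier_vec d"
  let ?x = "w h - w' h"
  have xc: "?x \<in> carrier_vec d" using c h by auto
  have "(?x $ i)\<^sup>2 \<le> ?x \<bullet> ?x"
  proof -
    have dx: "dim_vec ?x = d" using carrier_vecD[OF xc] .
    have "?x \<bullet> ?x = (\<Sum>l\<in>{0..<d}. ?x $ l * ?x $ l)" unfolding scalar_prod_def by (simp only: dx)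
    moreover have "?x $ i * ?x $ i \<le> (\<Sum>l\<in>{0..<d}. ?x $ l * ?x $ l)"
      using i by (intro member_le_sum) auto
    ultimately show ?thesis by (simp add: power2_eq_square)
  qed
  also have "?x \<bullet> ?x \<le> (\<Sum>h'\<in>R. (w h' - w' h') \<bullet> (w h' - w' h'))"
    using h R_fin sp_nonneg by (intro member_le_sum) auto
  finally have "sqrt ((?x $ i)\<^sup>2) \<le> fdist R w w'" unfolding fdist_def by (rule real_sqrt_le_mono)
  moreover have "?x $ i = w h $ i - w' h $ i"
  proof -
    have "w' h \<in> carrier_vec d" "w h \<in> carrier_vec d" using c h by auto
    then show ?thesis using i by simp
  qed
  ultimately show "\<bar>w h $ i - w' h $ i\<bar> \<le> 1 * fdist R w w'" by simp
qed

lemma lip_const: "lipf (\<lambda>w. c)"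
  unfolding lipf_def by (intro exI[of _ 0]) simp

lemma lip_add: assumes "lipf F" "lipf F'" shows "lipf (\<lambda>w. F w + F' w)"
proof -
  obtain M where M: "\<forall>w w'. (\<forall>h\<in>R. w h \<in> carrier_vec d \<and> w' h \<in> carrier_vec d) \<longrightarrow>
      \<bar>F w - F w'\<bar> \<le> M * fdist R w w'" using assms(1) unfolding lipf_def by blast
  obtain M' where M': "\<forall>w w'. (\<forall>h\<in>R. w h \<in> carrier_vec d \<and> w' h \<in> carrier_vec d) \<longrightarrow>
      \<bar>F' w - F' w'\<bar> \<le> M' * fdist R w w'" using assms(2) unfolding lipf_def by blast
  show ?thesis unfolding lipf_def
  proof (intro exI[of _ "M + M'"] allI impI)
    fix w w' :: "euc \<Rightarrow> real vec" assume c: "\<forall>h\<in>R. w h \<in> carrier_vec d \<and> w' h \<in> carrier_vec d"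
    have "\<bar>F w + F' w - (F w' + F' w')\<bar> \<le> \<bar>F w - F w'\<bar> + \<bar>F' w - F' w'\<bar>" by linarith
    also have "\<dots> \<le> M * fdist R w w' + M' * fdist R w w'" using M M' c by (meson add_mono)
    finally show "\<bar>F w + F' w - (F w' + F' w')\<bar> \<le> (M + M') * fdist R w w'" by (simp add: distrib_right)
  qed
qed

lemma lip_scale: assumes "lipf F" shows "lipf (\<lambda>w. c * F w)"
proof -
  obtain M where M: "\<forall>w w'. (\<forall>h\<in>R. w h \<in> carrier_vec d \<and> w' h \<in> carrier_vec d) \<longrightarrow>
      \<bar>F w - F w'\<bar> \<le> M * fdist R w w'" using assms(1) unfolding lipf_def by blast
  show ?thesis unfolding lipf_def
  proof (intro exI[of _ "\<bar>c\<bar> * M"] allI impI)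
    fix w w' :: "euc \<Rightarrow> real vec" assume c: "\<forall>h\<in>R. w h \<in> carrier_vec d \<and> w' h \<in> carrier_vec d"
    have "\<bar>c * F w - c * F w'\<bar> = \<bar>c\<bar> * \<bar>F w - F w'\<bar>" by (simp add: abs_mult[symmetric] right_diff_distrib)
    also have "\<dots> \<le> \<bar>c\<bar> * (M * fdist R w w')" using M c by (intro mult_left_mono) auto
    finally show "\<bar>c * F w - c * F w'\<bar> \<le> \<bar>c\<bar> * M * fdist R w w'" by (simp add: mult.assoc)
  qed
qed

lemma lip_diff: assumes "lipf F" "lipf F'" shows "lipf (\<lambda>w. F w - F' w)"
  using lip_add[OF assms(1) lip_scale[OF assms(2), of "-1"]] by simp

lemma lip_sum: assumes I: "finite I" and F: "\<forall>i\<in>I. lipf (F i)" shows "lipf (\<lambda>w. \<Sum>i\<in>I. F i w)"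
  using I F
proof (induction I rule: finite_induct)
  case empty then show ?case using lip_const by simp
next
  case (insert x I)
  then show ?case using lip_add[of "F x" "\<lambda>w. \<Sum>i\<in>I. F i w"] by simp
qed

lemma lip_Wf: "h \<in> R \<Longrightarrow> i < d \<Longrightarrow> lipf (\<lambda>w. Wf w h i)"
  unfolding Wf_def by (intro lip_sum) (auto intro!: lip_scale lip_coord)

lemma lip_Lf: "i < d \<Longrightarrow> lipf (\<lambda>w. Lf w j i)"
  unfolding Lf_def using R_fin R_eid by (intro lip_sum) (auto intro!: lip_scale lip_diff lip_Wf)

lemma U_nonempty: "restrict (\<lambda>h. 0\<^sub>v d) R \<in> U_iso d x0 R"
proof -
  have "0\<^sub>m d d \<in> skew d" by (auto simp: skew_def)
  moreover have "\<forall>h\<in>R. rot h *\<^sub>v restrict (\<lambda>h. 0\<^sub>v d) R h = 0\<^sub>v d + 0\<^sub>m d d *\<^sub>v (eact h x0 - x0)"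
  proof
    fix h assume h: "h \<in> R"
    then have hG: "h \<in> G" using R_G by blast
    have zc: "eact h x0 - x0 \<in> carrier_vec d" using orbit_carrier[OF hG] x0_carrier by simp
    show "rot h *\<^sub>v restrict (\<lambda>h. 0\<^sub>v d) R h = 0\<^sub>v d + 0\<^sub>m d d *\<^sub>v (eact h x0 - x0)"
      using h G_rotc[OF hG] zc by simp
  qed
  ultimately show ?thesis unfolding U_iso_def by auto
qed

lemma closed_lem: assumes L: "lipf F" and U0: "\<forall>w\<in>U_iso d x0 R. F w = 0"
  and vc: "\<forall>h\<in>R. v h \<in> carrier_vec d" and sd: "setdist R v (U_iso d x0 R) = 0"
  shows "F v = 0"
proof (rule ccontr)
  assume nz: "F v \<noteq> 0"
  obtain M where M: "\<forall>w w'. (\<forall>h\<in>R. w h \<in> carrier_vec d \<and> w' h \<in> carrier_vec d) \<longrightarrow>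
      \<bar>F w - F w'\<bar> \<le> M * fdist R w w'" using L unfolding lipf_def by blast
  define e where "e = \<bar>F v\<bar> / (\<bar>M\<bar> + 1)"
  have epos: "e > 0" using nz by (simp add: e_def)
  let ?D = "{fdist R v w | w. w \<in> U_iso d x0 R}"
  have ne: "?D \<noteq> {}" using U_nonempty by blast
  have bdd: "bdd_below ?D" using fdist_nonneg by (intro bdd_belowI[of _ 0]) auto
  have "Inf ?D < e" using sd epos unfolding setdist_def by simp
  then obtain x where "x \<in> ?D" "x < e" using cInf_less_iff[OF ne bdd] by blast
  then obtain w where w: "w \<in> U_iso d x0 R" "fdist R v w < e" by blast
  have wc: "\<forall>h\<in>R. w h \<in> carrier_vec d" using w(1) unfolding U_iso_def by blast
  have "\<bar>F v\<bar> = \<bar>F v - F w\<bar>" using U0 w(1) by simp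
  also have "\<dots> \<le> M * fdist R v w" using M vc wc by blast
  also have "\<dots> \<le> \<bar>M\<bar> * fdist R v w" using fdist_nonneg by (intro mult_right_mono) auto
  also have "\<dots> \<le> \<bar>M\<bar> * e" using w(2) by (intro mult_left_mono) auto
  also have "\<dots> < \<bar>F v\<bar>"
  proof -
    have "\<bar>M\<bar> * e = \<bar>F v\<bar> * (\<bar>M\<bar> / (\<bar>M\<bar> + 1))" by (simp add: e_def)
    also have "\<dots> < \<bar>F v\<bar> * 1" using nz by (intro mult_strict_left_mono) auto
    finally show ?thesis by simp
  qed
  finally show False by simp
qed

lemma closed_U: assumes ve: "v \<in> extensional R" and vc: "\<forall>h\<in>R. v h \<in> carrier_vec d"
  and sd: "setdist R v (U_iso d x0 R) = 0"
  shows "v \<in> U_iso d x0 R"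
proof (rule Uchar2[OF ve vc])
  show "C1 v" unfolding C1_def
  proof (intro ballI allI impI)
    fix h i assume h: "h \<in> R" and i: "i < d"
    let ?F = "\<lambda>w. Wf w h i - Wf w (eid d) i - (\<Sum>l\<in>{d3..<d}. (eact h x0 - x0) $ l * Lf w l i)"
    have L: "lipf ?F"
      by (intro lip_diff lip_Wf lip_sum lip_scale lip_Lf h i R_eid ballI finite_atLeastLessThan)
    have "\<forall>w\<in>U_iso d x0 R. ?F w = 0" using Uchar1 h i unfolding C1_def by auto
    from closed_lem[OF L this vc sd]
    show "Wf v h i - Wf v (eid d) i = (\<Sum>l\<in>{d3..<d}. (eact h x0 - x0) $ l * Lf v l i)" by simp
  qed
  show "C2 v" unfolding C2_def
  proof (intro ballI)
    fix i j assume i: "i \<in> {d3..<d}" and j: "j \<in> {d3..<d}"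
    let ?F = "\<lambda>w. Lf w j i + Lf w i j"
    have L: "lipf ?F" using i j by (intro lip_add lip_Lf) auto
    have "\<forall>w\<in>U_iso d x0 R. ?F w = 0" using Uchar1 i j unfolding C2_def by auto
    from closed_lem[OF L this vc sd] show "Lf v j i + Lf v i j = 0" .
  qed
qed

end

context cor_setting begin

definition affm :: "(real vec \<Rightarrow> real vec) \<Rightarrow> bool" where
  "affm f = ((\<forall>y\<in>carrier_vec d. f y \<in> carrier_vec d) \<and>
    (\<forall>F c y. finite F \<and> F \<subseteq> carrier_vec d \<and> sum c F = 1 \<and> y \<in> carrier_vec d \<and>
        (\<forall>j<d. y $ j = (\<Sum>x\<in>F. c x * x $ j)) \<longrightarrow> (\<forall>i<d. f y $ i = (\<Sum>x\<in>F. c x * f x $ i))))"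

lemma aff_id: "affm (\<lambda>y. y)" unfolding affm_def by auto

lemma aff_mat: assumes M: "M \<in> carrier_mat d d" and f: "affm f" shows "affm (\<lambda>y. M *\<^sub>v f y)"
  unfolding affm_def
proof (intro conjI allI impI ballI)
  fix y :: "real vec" assume "y \<in> carrier_vec d" then show "M *\<^sub>v f y \<in> carrier_vec d"
    using f M unfolding affm_def by auto
next
  fix F :: "real vec set" and c :: "real vec \<Rightarrow> real" and y :: "real vec" and i :: nat
  assume h: "finite F \<and> F \<subseteq> carrier_vec d \<and> sum c F = 1 \<and> y \<in> carrier_vec d \<and> (\<forall>j<d. y $ j = (\<Sum>x\<in>F. c x * x $ j))"
    and i: "i < d"
  have fy: "\<forall>l<d. f y $ l = (\<Sum>x\<in>F. c x * f x $ l)" using f h unfolding affm_def by blast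
  have fyc: "f y \<in> carrier_vec d" using f h unfolding affm_def by blast
  have fxc: "\<forall>x\<in>F. f x \<in> carrier_vec d" using f h unfolding affm_def by blast
  have "(M *\<^sub>v f y) $ i = (\<Sum>l<d. M $$ (i, l) * f y $ l)" using mv_index[OF M fyc i] .
  also have "\<dots> = (\<Sum>l<d. M $$ (i, l) * (\<Sum>x\<in>F. c x * f x $ l))" using fy by simp
  also have "\<dots> = (\<Sum>l<d. \<Sum>x\<in>F. c x * (M $$ (i, l) * f x $ l))"
    by (simp add: sum_distrib_left mult.left_commute)
  also have "\<dots> = (\<Sum>x\<in>F. \<Sum>l<d. c x * (M $$ (i, l) * f x $ l))" by (rule sum.swap)
  also have "\<dots> = (\<Sum>x\<in>F. c x * (M *\<^sub>v f x) $ i)"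
    using mv_index[OF M _ i] fxc by (simp add: sum_distrib_left)
  finally show "(M *\<^sub>v f y) $ i = (\<Sum>x\<in>F. c x * (M *\<^sub>v f x) $ i)" .
qed

lemma aff_addl: assumes q: "q \<in> carrier_vec d" and f: "affm f" shows "affm (\<lambda>y. q + f y)"
  unfolding affm_def
proof (intro conjI allI impI ballI)
  fix y :: "real vec" assume "y \<in> carrier_vec d" then show "q + f y \<in> carrier_vec d"
    using f q unfolding affm_def by auto
next
  fix F :: "real vec set" and c :: "real vec \<Rightarrow> real" and y :: "real vec" and i :: nat
  assume h: "finite F \<and> F \<subseteq> carrier_vec d \<and> sum c F = 1 \<and> y \<in> carrier_vec d \<and> (\<forall>j<d. y $ j = (\<Sum>x\<in>F. c x * x $ j))"
    and i: "i < d"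
  have fy: "f y $ i = (\<Sum>x\<in>F. c x * f x $ i)" using f h i unfolding affm_def by blast
  have fyc: "f y \<in> carrier_vec d" using f h unfolding affm_def by blast
  have fxc: "\<forall>x\<in>F. f x \<in> carrier_vec d" using f h unfolding affm_def by blast
  have "(q + f y) $ i = q $ i + (\<Sum>x\<in>F. c x * f x $ i)" using fy fyc q i by simp
  also have "\<dots> = (\<Sum>x\<in>F. c x * q $ i) + (\<Sum>x\<in>F. c x * f x $ i)" using h by (simp add: sum_distrib_right[symmetric])
  also have "\<dots> = (\<Sum>x\<in>F. c x * (q + f x) $ i)"
    by (simp add: sum.distrib[symmetric] distrib_left) (intro sum.cong, use fxc q i in \<open>auto simp: algebra_simps\<close>)
  finally show "(q + f y) $ i = (\<Sum>x\<in>F. c x * (q + f x) $ i)" .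
qed

lemma aff_minc: assumes q: "q \<in> carrier_vec d" and f: "affm f" shows "affm (\<lambda>y. f y - q)"
  unfolding affm_def
proof (intro conjI allI impI ballI)
  fix y :: "real vec" assume "y \<in> carrier_vec d" then show "f y - q \<in> carrier_vec d"
    using f q unfolding affm_def by auto
next
  fix F :: "real vec set" and c :: "real vec \<Rightarrow> real" and y :: "real vec" and i :: nat
  assume h: "finite F \<and> F \<subseteq> carrier_vec d \<and> sum c F = 1 \<and> y \<in> carrier_vec d \<and> (\<forall>j<d. y $ j = (\<Sum>x\<in>F. c x * x $ j))"
    and i: "i < d"
  have fy: "f y $ i = (\<Sum>x\<in>F. c x * f x $ i)" using f h i unfolding affm_def by blast
  have fyc: "f y \<in> carrier_vec d" using f h unfolding affm_def by blast
  have fxc: "\<forall>x\<in>F. f x \<in> carrier_vec d" using f h unfolding affm_def by blast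
  have "(f y - q) $ i = (\<Sum>x\<in>F. c x * f x $ i) - q $ i" using fy fyc q i by simp
  also have "\<dots> = (\<Sum>x\<in>F. c x * f x $ i) - (\<Sum>x\<in>F. c x * q $ i)" using h by (simp add: sum_distrib_right[symmetric])
  also have "\<dots> = (\<Sum>x\<in>F. c x * (f x - q) $ i)"
    by (simp add: sum_subtractf[symmetric] right_diff_distrib) (intro sum.cong, use fxc q i in \<open>auto simp: algebra_simps\<close>)
  finally show "(f y - q) $ i = (\<Sum>x\<in>F. c x * (f x - q) $ i)" .
qed

lemma aff_addc: assumes q: "q \<in> carrier_vec d" and f: "affm f" shows "affm (\<lambda>y. f y + q)"
  unfolding affm_def
proof (intro conjI allI impI ballI)
  fix y :: "real vec" assume "y \<in> carrier_vec d" then show "f y + q \<in> carrier_vec d"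
    using f q unfolding affm_def by auto
next
  fix F :: "real vec set" and c :: "real vec \<Rightarrow> real" and y :: "real vec" and i :: nat
  assume h: "finite F \<and> F \<subseteq> carrier_vec d \<and> sum c F = 1 \<and> y \<in> carrier_vec d \<and> (\<forall>j<d. y $ j = (\<Sum>x\<in>F. c x * x $ j))"
    and i: "i < d"
  have fy: "f y $ i = (\<Sum>x\<in>F. c x * f x $ i)" using f h i unfolding affm_def by blast
  have fyc: "f y \<in> carrier_vec d" using f h unfolding affm_def by blast
  have fxc: "\<forall>x\<in>F. f x \<in> carrier_vec d" using f h unfolding affm_def by blast
  have "(f y + q) $ i = (\<Sum>x\<in>F. c x * f x $ i) + q $ i" using fy fyc q i by simp
  also have "\<dots> = (\<Sum>x\<in>F. c x * f x $ i) + (\<Sum>x\<in>F. c x * q $ i)" using h by (simp add: sum_distrib_right[symmetric])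
  also have "\<dots> = (\<Sum>x\<in>F. c x * (f x + q) $ i)"
    by (simp add: sum.distrib[symmetric] distrib_left) (intro sum.cong, use fxc q i in \<open>auto simp: algebra_simps\<close>)
  finally show "(f y + q) $ i = (\<Sum>x\<in>F. c x * (f x + q) $ i)" .
qed

lemma aff_eq: assumes f1: "affm f1" and f2: "affm f2" and F: "finite F" "F \<subseteq> carrier_vec d" "sum c F = 1"
  and y: "y \<in> carrier_vec d" "\<forall>j<d. y $ j = (\<Sum>x\<in>F. c x * x $ j)"
  and eq: "\<forall>x\<in>F. f1 x = f2 x"
  shows "f1 y = f2 y"
proof -
  have c: "f1 y \<in> carrier_vec d" "f2 y \<in> carrier_vec d" using f1 f2 y unfolding affm_def by auto
  have "\<forall>i<d. f1 y $ i = (\<Sum>x\<in>F. c x * f1 x $ i)" using f1 F y unfolding affm_def by blast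
  moreover have "\<forall>i<d. f2 y $ i = (\<Sum>x\<in>F. c x * f2 x $ i)" using f2 F y unfolding affm_def by blast
  ultimately have "\<forall>i<d. f1 y $ i = f2 y $ i" using eq by simp
  then show ?thesis using c by (intro eq_vecI) auto
qed

lemma aff_eact: "k \<in> G \<Longrightarrow> affm (eact k)"
proof -
  assume k: "k \<in> G"
  have "affm (\<lambda>y. rot k *\<^sub>v y + snd k)"
    by (rule aff_addc[OF G_snd[OF k] aff_mat[OF G_rotc[OF k] aff_id]])
  then show ?thesis unfolding eact_def rot_def by simp
qed

lemma eact_diff: assumes g: "g \<in> G" and y: "y \<in> carrier_vec d"
  shows "(rot g)\<^sup>T *\<^sub>v (eact g y - eact g x0) = y - x0"
proof -
  have Rc: "rot g \<in> carrier_mat d d" using G_rotc[OF g] .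
  have "eact g y - eact g x0 = rot g *\<^sub>v y - rot g *\<^sub>v x0"
    using Rc y x0_carrier G_snd[OF g] unfolding eact_def rot_def by (intro eq_vecI) auto
  also have "\<dots> = rot g *\<^sub>v (y - x0)" using Rc y x0_carrier by (simp add: mult_minus_distrib_mat_vec)
  finally have "(rot g)\<^sup>T *\<^sub>v (eact g y - eact g x0) = (rot g)\<^sup>T *\<^sub>v (rot g *\<^sub>v (y - x0))" by simp
  also have "\<dots> = ((rot g)\<^sup>T * rot g) *\<^sub>v (y - x0)" using Rc y x0_carrier
    by (subst assoc_mult_mat_vec[of _ d d _ d]) auto
  also have "\<dots> = y - x0" using G_rotTr[OF g] y x0_carrier by simp
  finally show ?thesis .
qed

definition mot :: "(euc \<Rightarrow> real vec) \<Rightarrow> (euc \<Rightarrow> real mat) \<Rightarrow> euc \<Rightarrow> real vec \<Rightarrow> real vec" where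
  "mot A Sg g y = rot g *\<^sub>v (A g + Sg g *\<^sub>v ((rot g)\<^sup>T *\<^sub>v (y - eact g x0)))"

definition hypAS :: "(euc \<Rightarrow> real vec) \<Rightarrow> (euc \<Rightarrow> real mat) \<Rightarrow> (euc \<Rightarrow> real vec) \<Rightarrow> bool" where
  "hypAS A Sg u = (\<forall>g\<in>G. A g \<in> carrier_vec d \<and> Sg g \<in> skew d \<and>
     (\<forall>h\<in>R. rot h *\<^sub>v u (emult g h) = A g + Sg g *\<^sub>v (eact h x0 - x0)))"

lemma M1: assumes H: "hypAS A Sg u" and uc: "\<forall>g\<in>G. u g \<in> carrier_vec d" and g: "g \<in> G" and h: "h \<in> R"
  shows "rot (emult g h) *\<^sub>v u (emult g h) = mot A Sg g (eact (emult g h) x0)"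
proof -
  have hG: "h \<in> G" using h R_G by blast
  have ghG: "emult g h \<in> G" using G_mult[OF g hG] .
  have "rot (emult g h) *\<^sub>v u (emult g h) = rot g *\<^sub>v (rot h *\<^sub>v u (emult g h))"
    using G_rotc[OF g] G_rotc[OF hG] uc ghG by (simp add: rot_emult assoc_mult_mat_vec[of _ d d _ d])
  also have "\<dots> = rot g *\<^sub>v (A g + Sg g *\<^sub>v (eact h x0 - x0))" using H g h unfolding hypAS_def by simp
  also have "eact h x0 - x0 = (rot g)\<^sup>T *\<^sub>v (eact (emult g h) x0 - eact g x0)"
    using eact_diff[OF g orbit_carrier[OF hG]] G_eact_mult[OF g hG x0_carrier] by simp
  finally show ?thesis by (simp add: mot_def)
qed

lemma aff_mot_eact: assumes H: "hypAS A Sg u" and g: "g \<in> G" and k: "k \<in> G"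
  shows "affm (\<lambda>y. mot A Sg g (eact k y))"
proof -
  have Ac: "A g \<in> carrier_vec d" and Sc: "Sg g \<in> carrier_mat d d" using H g unfolding hypAS_def skew_def by auto
  have "affm (\<lambda>y. rot g *\<^sub>v (A g + Sg g *\<^sub>v ((rot g)\<^sup>T *\<^sub>v (eact k y - eact g x0))))"
    by (intro aff_mat aff_addl aff_minc aff_eact k G_rotc g Ac Sc orbit_carrier) (use G_rotc[OF g] in simp)
  then show ?thesis unfolding mot_def .
qed

lemma claimA: assumes H: "hypAS A Sg u" and uc: "\<forall>g\<in>G. u g \<in> carrier_vec d"
  and g: "g \<in> G" and r: "r \<in> R1" and k: "k \<in> G"
  shows "mot A Sg g (eact k x0) = mot A Sg (emult g r) (eact k x0)"
proof -
  have rG: "r \<in> G" using r R1_G by blast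
  define gr where "gr = emult g r"
  have grG: "gr \<in> G" using G_mult[OF g rG] by (simp add: gr_def)
  define k' where "k' = emult (einv gr) k"
  have k'G: "k' \<in> G" using G_mult[OF G_inv[OF grG] k] by (simp add: k'_def)
  have "emult gr k' = k"
  proof -
    have "emult gr k' = emult (emult gr (einv gr)) k" unfolding k'_def using G_assoc[OF grG G_inv[OF grG] k] by simp
    also have "\<dots> = k" using G_rinv[OF grG] G_lid[OF k] by simp
    finally show ?thesis .
  qed
  then have ek: "eact k x0 = eact gr (eact k' x0)" using G_eact_mult[OF grG k'G x0_carrier] by simp
  let ?y = "eact k' x0"
  have "?y \<in> affhull d ((\<lambda>g. eact g x0) ` G)"
  proof -
    have "finite {?y} \<and> {?y} \<noteq> {} \<and> {?y} \<subseteq> (\<lambda>g. eact g x0) ` G \<and> sum (\<lambda>_. 1::real) {?y} = 1 \<and>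
       (\<forall>j<d. ?y $ j = (\<Sum>x\<in>{?y}. 1 * x $ j))" using k'G by auto
    then show ?thesis unfolding affhull_def using orbit_carrier[OF k'G] by blast
  qed
  then have "?y \<in> affhull d ((\<lambda>g. eact g x0) ` R2)" using R2_aff by simp
  then have "\<exists>F c. finite F \<and> F \<noteq> {} \<and> F \<subseteq> (\<lambda>g. eact g x0) ` R2 \<and> sum c F = 1 \<and>
      (\<forall>j<d. ?y $ j = (\<Sum>x\<in>F. c x * x $ j))"
    unfolding affhull_def mem_Collect_eq by (rule conjunct2)
  then obtain F c where F0: "finite F \<and> F \<noteq> {} \<and> F \<subseteq> (\<lambda>g. eact g x0) ` R2 \<and> sum c F = 1 \<and>
      (\<forall>j<d. ?y $ j = (\<Sum>x\<in>F. c x * x $ j))" by blast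
  then have F: "finite F" "F \<subseteq> (\<lambda>g. eact g x0) ` R2" "sum c F = 1"
    "\<forall>j<d. ?y $ j = (\<Sum>x\<in>F. c x * x $ j)" by auto
  have Fc: "F \<subseteq> carrier_vec d"
  proof
    fix x assume "x \<in> F"
    then obtain h where "h \<in> R2" "x = eact h x0" using F(2) by blast
    then show "x \<in> carrier_vec d" using R2_G orbit_carrier by blast
  qed
  have eqF: "\<forall>x\<in>F. mot A Sg g (eact gr x) = mot A Sg gr (eact gr x)"
  proof
    fix x assume "x \<in> F"
    then obtain h where h: "h \<in> R2" "x = eact h x0" using F(2) by blast
    have hG: "h \<in> G" using h R2_G by blast
    have rhR: "emult r h \<in> R" using R12_R[OF r h(1)] .
    have e1: "emult gr h = emult g (emult r h)" unfolding gr_def using G_assoc[OF g rG hG] .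
    have "eact gr x = eact (emult gr h) x0" using h G_eact_mult[OF grG hG x0_carrier] by simp
    moreover have "rot (emult g (emult r h)) *\<^sub>v u (emult g (emult r h)) = mot A Sg g (eact (emult g (emult r h)) x0)"
      using M1[OF H uc g rhR] .
    moreover have "rot (emult gr h) *\<^sub>v u (emult gr h) = mot A Sg gr (eact (emult gr h) x0)"
      using M1[OF H uc grG R2_R[OF h(1)]] .
    ultimately show "mot A Sg g (eact gr x) = mot A Sg gr (eact gr x)" using e1 by simp
  qed
  have "mot A Sg g (eact gr ?y) = mot A Sg gr (eact gr ?y)"
    by (rule aff_eq[OF aff_mot_eact[OF H g grG] aff_mot_eact[OF H grG grG] F(1) Fc F(3) orbit_carrier[OF k'G] F(4) eqF])
  then show ?thesis using ek by (simp add: gr_def)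
qed

definition eqv where "eqv A Sg g k = (\<forall>k'\<in>G. mot A Sg g (eact k' x0) = mot A Sg k (eact k' x0))"

lemma global_eqv: assumes H: "hypAS A Sg u" and uc: "\<forall>g\<in>G. u g \<in> carrier_vec d"
  shows "\<forall>g\<in>G. eqv A Sg g (eid d)"
proof -
  let ?H = "{r \<in> G. \<forall>k\<in>G. eqv A Sg (emult k r) k}"
  have "x \<in> ?H" if x: "x \<in> egen d R1" for x
    using x
  proof (induction rule: egen.induct)
    case egen_id
    then show ?case using G_eid G_rid by (auto simp: eqv_def)
  next
    case (egen_base x)
    have xG: "x \<in> G" using egen_base R1_G by blast
    have "eqv A Sg (emult k x) k" if k: "k \<in> G" for k
      unfolding eqv_def
    proof
      fix k' assume k': "k' \<in> G"
      show "mot A Sg (emult k x) (eact k' x0) = mot A Sg k (eact k' x0)"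
        using claimA[OF H uc k egen_base k'] by simp
    qed
    then show ?case using xG by blast
  next
    case (egen_mult g h)
    have gG: "g \<in> G" and hG: "h \<in> G" using egen_mult by auto
    have "eqv A Sg (emult k (emult g h)) k" if k: "k \<in> G" for k
    proof -
      have kg: "emult k g \<in> G" using G_mult[OF k gG] .
      have "eqv A Sg (emult (emult k g) h) (emult k g)" using egen_mult kg by blast
      moreover have "eqv A Sg (emult k g) k" using egen_mult k by blast
      moreover have "emult (emult k g) h = emult k (emult g h)" using G_assoc[OF k gG hG] .
      ultimately show ?thesis by (simp add: eqv_def)
    qed
    then show ?case using G_mult[OF gG hG] by blast
  next
    case (egen_inv g)
    have gG: "g \<in> G" using egen_inv by auto
    have "eqv A Sg (emult k (einv g)) k" if k: "k \<in> G" for k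
    proof -
      have kg: "emult k (einv g) \<in> G" using G_mult[OF k G_inv[OF gG]] .
      have "eqv A Sg (emult (emult k (einv g)) g) (emult k (einv g))" using egen_inv kg by blast
      moreover have "emult (emult k (einv g)) g = k"
        using G_assoc[OF k G_inv[OF gG] gG] G_linv[OF gG] G_rid[OF k] by simp
      ultimately show ?thesis by (simp add: eqv_def)
    qed
    then show ?case using G_inv[OF gG] by blast
  qed
  then have "G \<subseteq> ?H" using R1_gen by blast
  show ?thesis
  proof
    fix g assume g: "g \<in> G"
    then have "g \<in> ?H" using \<open>G \<subseteq> ?H\<close> by blast
    then have "eqv A Sg (emult (eid d) g) (eid d)" using G_eid by blast
    then show "eqv A Sg g (eid d)" using G_lid[OF g] by simp
  qed
qed

lemma global: assumes uc: "\<forall>g\<in>G. u g \<in> carrier_vec d"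
  and loc: "\<forall>g\<in>G. restrict (\<lambda>h. u (emult g h)) R \<in> U_iso d x0 R"
  shows "\<exists>a S. a \<in> carrier_vec d \<and> S \<in> skew d \<and> (\<forall>g\<in>G. rot g *\<^sub>v u g = a + S *\<^sub>v (eact g x0 - x0))"
proof -
  have "\<forall>g\<in>G. \<exists>aS. fst aS \<in> carrier_vec d \<and> snd aS \<in> skew d \<and>
     (\<forall>h\<in>R. rot h *\<^sub>v u (emult g h) = fst aS + snd aS *\<^sub>v (eact h x0 - x0))"
  proof
    fix g assume g: "g \<in> G"
    from loc g obtain a S where "a \<in> carrier_vec d" "S \<in> skew d"
      "\<forall>h\<in>R. rot h *\<^sub>v restrict (\<lambda>h. u (emult g h)) R h = a + S *\<^sub>v (eact h x0 - x0)"
      unfolding U_iso_def by blast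
    then show "\<exists>aS. fst aS \<in> carrier_vec d \<and> snd aS \<in> skew d \<and>
     (\<forall>h\<in>R. rot h *\<^sub>v u (emult g h) = fst aS + snd aS *\<^sub>v (eact h x0 - x0))"
      by (intro exI[of _ "(a, S)"]) auto
  qed
  from bchoice[OF this] obtain f where f: "\<forall>g\<in>G. fst (f g) \<in> carrier_vec d \<and> snd (f g) \<in> skew d \<and>
     (\<forall>h\<in>R. rot h *\<^sub>v u (emult g h) = fst (f g) + snd (f g) *\<^sub>v (eact h x0 - x0))" by blast
  define A where "A = (\<lambda>g. fst (f g))"
  define Sg where "Sg = (\<lambda>g. snd (f g))"
  have H: "hypAS A Sg u" unfolding hypAS_def A_def Sg_def using f by blast
  have E: "\<forall>g\<in>G. eqv A Sg g (eid d)" using global_eqv[OF H uc] .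
  have Ac: "A (eid d) \<in> carrier_vec d" and Ss: "Sg (eid d) \<in> skew d" using H G_eid unfolding hypAS_def by auto
  have Sc: "Sg (eid d) \<in> carrier_mat d d" using Ss by (simp add: skew_def)
  show ?thesis
  proof (intro exI[of _ "A (eid d)"] exI[of _ "Sg (eid d)"] conjI Ac Ss ballI)
    fix g assume g: "g \<in> G"
    have "rot g *\<^sub>v u g = rot (emult g (eid d)) *\<^sub>v u (emult g (eid d))" using G_rid[OF g] by simp
    also have "\<dots> = mot A Sg g (eact (emult g (eid d)) x0)" using M1[OF H uc g R_eid] .
    also have "\<dots> = mot A Sg g (eact g x0)" using G_rid[OF g] by simp
    also have "\<dots> = mot A Sg (eid d) (eact g x0)" using E g unfolding eqv_def by blast
    also have "\<dots> = A (eid d) + Sg (eid d) *\<^sub>v (eact g x0 - x0)"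
    proof -
      have c: "eact g x0 - x0 \<in> carrier_vec d" using orbit_carrier[OF g] x0_carrier by simp
      have "mot A Sg (eid d) (eact g x0) = 1\<^sub>m d *\<^sub>v (A (eid d) + Sg (eid d) *\<^sub>v ((1\<^sub>m d)\<^sup>T *\<^sub>v (eact g x0 - x0)))"
        unfolding mot_def rot_eid x0_eq ..
      also have "\<dots> = A (eid d) + Sg (eid d) *\<^sub>v (eact g x0 - x0)" using c Ac Sc by simp
      finally show ?thesis .
    qed
    finally show "rot g *\<^sub>v u g = A (eid d) + Sg (eid d) *\<^sub>v (eact g x0 - x0)" .
  qed
qed

end

lemma lin_comb_mv:
  fixes M :: "real mat"
  assumes M: "M \<in> carrier_mat n n" and I: "finite I" and xc: "\<forall>i\<in>I. x i \<in> carrier_vec n"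
    and y: "y \<in> carrier_vec n" and yc: "\<forall>l<n. y $ l = (\<Sum>i\<in>I. c i * x i $ l)"
  shows "\<forall>k<n. (M *\<^sub>v y) $ k = (\<Sum>i\<in>I. c i * (M *\<^sub>v x i) $ k)"
proof (intro allI impI)
  fix k assume k: "k < n"
  have "(M *\<^sub>v y) $ k = (\<Sum>l<n. M $$ (k, l) * y $ l)" using mv_index[OF M y k] .
  also have "\<dots> = (\<Sum>l<n. M $$ (k, l) * (\<Sum>i\<in>I. c i * x i $ l))" using yc by simp
  also have "\<dots> = (\<Sum>l<n. \<Sum>i\<in>I. c i * (M $$ (k, l) * x i $ l))"
    by (simp add: sum_distrib_left mult.left_commute)
  also have "\<dots> = (\<Sum>i\<in>I. \<Sum>l<n. c i * (M $$ (k, l) * x i $ l))" by (rule sum.swap)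
  also have "\<dots> = (\<Sum>i\<in>I. c i * (M *\<^sub>v x i) $ k)"
    using mv_index[OF M _ k] xc by (simp add: sum_distrib_left)
  finally show "(M *\<^sub>v y) $ k = (\<Sum>i\<in>I. c i * (M *\<^sub>v x i) $ k)" .
qed

context cor_setting begin

lemma TN_props: assumes N: "N \<in> periods m0"
  shows "TNpow d T N \<subseteq> G" "\<forall>g\<in>G. \<forall>h\<in>TNpow d T N. emult (emult g h) (einv g) \<in> TNpow d T N"
proof -
  have "N \<ge> 1" "m0 dvd N" using N by (auto simp: periods_def)
  then have "enormal d (TNpow d T N) G" using TN_normal by blast
  then show "TNpow d T N \<subseteq> G" "\<forall>g\<in>G. \<forall>h\<in>TNpow d T N. emult (emult g h) (einv g) \<in> TNpow d T N"
    by (auto simp: enormal_def)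
qed

lemma per_shift: assumes N: "N \<in> periods m0" and per: "periodic G (TNpow d T N) u"
  and c: "c \<in> G" and t: "t \<in> TNpow d T N" and h: "h \<in> G"
  shows "u (emult (emult c t) h) = u (emult c h)"
proof -
  have tG: "t \<in> G" using TN_props(1)[OF N] t by blast
  have hi: "einv h \<in> G" using G_inv[OF h] .
  define t' where "t' = emult (emult (einv h) t) h"
  have "t' = emult (emult (einv h) t) (einv (einv h))" using G_invinv[OF h] by (simp add: t'_def)
  then have t'T: "t' \<in> TNpow d T N" using TN_props(2)[OF N] hi t by simp
  have ht: "emult (einv h) t \<in> G" using G_mult[OF hi tG] .
  have "emult (emult c h) t' = emult c (emult h t')" using G_assoc[OF c h] G_mult[OF ht h] by (simp add: t'_def)
  also have "emult h t' = emult (emult h (emult (einv h) t)) h" unfolding t'_def using G_assoc[OF h ht h] by simp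
  also have "emult h (emult (einv h) t) = emult (emult h (einv h)) t" using G_assoc[OF h hi tG] by simp
  also have "\<dots> = t" using G_rinv[OF h] G_lid[OF tG] by simp
  also have "emult c (emult t h) = emult (emult c t) h" using G_assoc[OF c tG h] by simp
  finally have "emult (emult c h) t' = emult (emult c t) h" .
  moreover have "u (emult (emult c h) t') = u (emult c h)" using per G_mult[OF c h] t'T unfolding periodic_def by blast
  ultimately show ?thesis by simp
qed

lemma setdist_zero_imp: assumes ve: "v \<in> extensional R" and vc: "\<forall>h\<in>R. v h \<in> carrier_vec d"
  and sd: "setdist R v (U_iso d x0 R) = 0" shows "v \<in> U_iso d x0 R"
  using closed_U[OF ve vc sd] .

lemma ker_local: assumes u: "u \<in> kerR d G T m0 C x0 R"
  shows "\<exists>N\<in>periods m0. periodic G (TNpow d T N) u \<and>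
    (\<forall>g\<in>G. restrict (\<lambda>h. u (emult g h)) R \<in> U_iso d x0 R)"
proof -
  obtain N where N: "N \<in> periods m0" "periodic G (TNpow d T N) u" "seminormR d x0 R (C N) u = 0"
    using u unfolding kerR_def by blast
  have uc: "\<forall>g\<in>G. u g \<in> carrier_vec d" using u unfolding kerR_def U_per_def by blast
  have Cp: "C N \<subseteq> G" "finite (C N)" "\<forall>g\<in>G. \<exists>!c. c \<in> C N \<and> (\<exists>t\<in>TNpow d T N. g = emult c t)"
    using C_reps N(1) by auto
  have "C N \<noteq> {}" using Cp(3) G_eid by blast
  then have cpos: "card (C N) > 0" using Cp(2) by (simp add: card_gt_0_iff)
  let ?f = "\<lambda>g. (setdist R (restrict (\<lambda>h. u (emult g h)) R) (U_iso d x0 R))\<^sup>2"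
  have "1 / real (card (C N)) * (\<Sum>g\<in>C N. ?f g) = 0" using N(3) unfolding seminormR_def by simp
  then have "(\<Sum>g\<in>C N. ?f g) = 0" using cpos by simp
  then have f0: "\<forall>g\<in>C N. ?f g = 0" using sum_nonneg_eq_0_iff[OF Cp(2), of ?f] by simp
  have locC: "restrict (\<lambda>h. u (emult c h)) R \<in> U_iso d x0 R" if c: "c \<in> C N" for c
  proof (rule setdist_zero_imp)
    show "restrict (\<lambda>h. u (emult c h)) R \<in> extensional R" by simp
    show "\<forall>h\<in>R. restrict (\<lambda>h. u (emult c h)) R h \<in> carrier_vec d"
    proof
      fix h assume h: "h \<in> R"
      have "c \<in> G" "h \<in> G" using Cp(1) c R_G h by auto
      then have "emult c h \<in> G" using G_mult by blast
      then show "restrict (\<lambda>h. u (emult c h)) R h \<in> carrier_vec d" using uc h by simp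
    qed
    show "setdist R (restrict (\<lambda>h. u (emult c h)) R) (U_iso d x0 R) = 0" using f0 c by simp
  qed
  have "restrict (\<lambda>h. u (emult g h)) R \<in> U_iso d x0 R" if g: "g \<in> G" for g
  proof -
    obtain c t where ct: "c \<in> C N" "t \<in> TNpow d T N" "g = emult c t" using Cp(3) g by blast
    have "restrict (\<lambda>h. u (emult g h)) R = restrict (\<lambda>h. u (emult c h)) R"
    proof (rule restrict_ext)
      fix h assume "h \<in> R"
      then show "u (emult g h) = u (emult c h)" using per_shift[OF N(1) N(2) _ ct(2)] ct Cp(1) R_G by blast
    qed
    then show ?thesis using locC[OF ct(1)] by simp
  qed
  then show ?thesis using N by blast
qed

lemma per_iter: assumes N: "N \<in> periods m0" and per: "periodic G (TNpow d T N) u"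
  and s: "s \<in> TNpow d T N"
  shows "g \<in> G \<Longrightarrow> u (emult g (epow d s k)) = u g"
proof (induction k arbitrary: g)
  case 0 then show ?case using G_rid by simp
next
  case (Suc k)
  have sG: "s \<in> G" using TN_props(1)[OF N] s by blast
  have "emult g (epow d s (Suc k)) = emult (emult g s) (epow d s k)"
    using G_assoc[OF Suc.prems sG epow_G[OF sG]] by simp
  then have "u (emult g (epow d s (Suc k))) = u (emult g s)" using Suc.IH G_mult[OF Suc.prems sG] by simp
  also have "\<dots> = u g" using per Suc.prems s unfolding periodic_def by blast
  finally show ?case .
qed

lemma smult_mv: "M \<in> carrier_mat n m \<Longrightarrow> z \<in> carrier_vec m \<Longrightarrow> (c \<cdot>\<^sub>m M) *\<^sub>v z = c \<cdot>\<^sub>v (M *\<^sub>v (z :: real vec))"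
  by (intro eq_vecI) (auto simp: mv_index sum_distrib_left mult.assoc)

lemma kills_T: assumes N: "N \<in> periods m0" and per: "periodic G (TNpow d T N) u"
  and uc: "\<forall>g\<in>G. u g \<in> carrier_vec d"
  and a: "a \<in> carrier_vec d" and Sm: "Sm \<in> carrier_mat d d"
  and W: "\<forall>g\<in>G. rot g *\<^sub>v u g = a + Sm *\<^sub>v (eact g x0 - x0)"
  and t: "t \<in> T" and tf: "t = dsum d1 d2 A (1\<^sub>m d2, b)" and Ac: "A \<in> carrier_mat d1 d1" and bc: "b \<in> carrier_vec d2"
  shows "Sm *\<^sub>v (0\<^sub>v d1 @\<^sub>v b) = 0\<^sub>v d"
proof -
  have tG: "t \<in> G" using t T_sub by blast
  define n where "n = N * Kf"
  define p where "p = epow d t n"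
  have pG: "p \<in> G" using epow_G[OF tG] by (simp add: p_def)
  have rp: "rot p = 1\<^sub>m d" unfolding p_def n_def by (rule rot_epow_Kf[OF tG]) simp
  have sp: "snd p = 0\<^sub>v d1 @\<^sub>v (real n \<cdot>\<^sub>v b)" unfolding p_def using epow_transl_snd[OF Ac bc] tf d_def by simp
  have sN: "epow d t N \<in> TNpow d T N" unfolding TNpow_def using t by blast
  have "p = epow d (epow d t N) Kf" unfolding p_def n_def using epow_mult[OF G_sg tG] by simp
  then have "u (emult (eid d) p) = u (eid d)" using per_iter[OF N per sN G_eid] by simp
  then have up: "u p = u (eid d)" using G_lid[OF pG] by simp
  have ue: "u (eid d) \<in> carrier_vec d" using uc G_eid by blast
  have "rot p *\<^sub>v u p = u (eid d)" using rp up ue by simp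
  moreover have "rot (eid d) *\<^sub>v u (eid d) = u (eid d)" using rot_eid ue by simp
  ultimately have "a + Sm *\<^sub>v (eact p x0 - x0) = a + Sm *\<^sub>v (eact (eid d) x0 - x0)" using W pG G_eid by metis
  moreover have "eact p x0 - x0 = snd p"
    using rp G_snd[OF pG] x0_carrier unfolding eact_def rot_def by (intro eq_vecI) auto
  moreover have "Sm *\<^sub>v (eact (eid d) x0 - x0) = 0\<^sub>v d"
  proof -
    have "eact (eid d) x0 - x0 = 0\<^sub>v d" using x0_eq x0_carrier by (intro eq_vecI) auto
    then show ?thesis using Sm by simp
  qed
  ultimately have eqa: "a + Sm *\<^sub>v snd p = a + 0\<^sub>v d" by simp
  have vc: "Sm *\<^sub>v snd p \<in> carrier_vec d" using Sm G_snd[OF pG] by simp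
  have S0: "Sm *\<^sub>v snd p = 0\<^sub>v d"
  proof (rule eq_vecI)
    fix i assume i: "i < dim_vec (0\<^sub>v d :: real vec)"
    from arg_cong[OF eqa, of "\<lambda>v. v $ i"] show "(Sm *\<^sub>v snd p) $ i = 0\<^sub>v d $ i" using i a vc carrier_vecD[OF vc] by simp
  qed (use Sm in simp)
  have np: "real n \<noteq> 0" using Kf_pos N by (simp add: n_def periods_def)
  have "0\<^sub>v d1 @\<^sub>v (real n \<cdot>\<^sub>v b) = real n \<cdot>\<^sub>v (0\<^sub>v d1 @\<^sub>v b)" using bc by (intro eq_vecI) auto
  then have nz: "real n \<cdot>\<^sub>v (Sm *\<^sub>v (0\<^sub>v d1 @\<^sub>v b)) = 0\<^sub>v d"
    using S0 sp Sm bc d_def mult_mat_vec[OF Sm, of "0\<^sub>v d1 @\<^sub>v b" "real n"] by simp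
  show ?thesis
  proof (rule eq_vecI)
    fix i assume i: "i < dim_vec (0\<^sub>v d :: real vec)"
    from arg_cong[OF nz, of "\<lambda>v. v $ i"] have "real n * (Sm *\<^sub>v (0\<^sub>v d1 @\<^sub>v b)) $ i = 0"
      using i Sm by simp
    then show "(Sm *\<^sub>v (0\<^sub>v d1 @\<^sub>v b)) $ i = 0\<^sub>v d $ i" using np i by simp
  qed (use Sm in simp)
qed

end

lemma mdsum_index:
  assumes A: "A \<in> carrier_mat n1 n1" and B: "B \<in> carrier_mat n2 n2" and i: "i < n1 + n2" and j: "j < n1 + n2"
  shows "mdsum A B $$ (i, j) = (if i < n1 then (if j < n1 then A $$ (i, j) else 0)
      else (if j < n1 then 0 else B $$ (i - n1, j - n1)))"
  using A B i j by (simp add: mdsum_def)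

lemma mdsum_carrier: "A \<in> carrier_mat n1 n1 \<Longrightarrow> B \<in> carrier_mat n2 n2 \<Longrightarrow> mdsum A B \<in> carrier_mat (n1 + n2) (n1 + n2)"
  by (simp add: mdsum_def)

context cor_setting begin

lemma col_zero: fixes Sm :: "real mat" assumes Sm: "Sm \<in> carrier_mat d d" and K: "\<forall>y\<in>carrier_vec d2. Sm *\<^sub>v (0\<^sub>v d1 @\<^sub>v y) = 0\<^sub>v d"
  and i: "i < d" and j: "d1 \<le> j" "j < d"
  shows "Sm $$ (i, j) = 0"
proof -
  have uv: "unit_vec d j = 0\<^sub>v d1 @\<^sub>v unit_vec d2 (j - d1)"
    using j d_def by (intro eq_vecI) auto
  have uc: "unit_vec d j \<in> carrier_vec d" by simp
  have "(Sm *\<^sub>v unit_vec d j) $ i = (\<Sum>l<d. Sm $$ (i, l) * unit_vec d j $ l)" using mv_index[OF Sm uc i] .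
  also have "\<dots> = (\<Sum>l<d. if l = j then Sm $$ (i, l) else 0)" using j by (intro sum.cong) auto
  also have "\<dots> = Sm $$ (i, j)" using j by simp
  finally have "Sm $$ (i, j) = (Sm *\<^sub>v unit_vec d j) $ i" by simp
  also have "\<dots> = 0"
  proof -
    have "Sm *\<^sub>v unit_vec d j = 0\<^sub>v d" unfolding uv using K[rule_format, of "unit_vec d2 (j - d1)"] by simp
    then show ?thesis using i by simp
  qed
  finally show ?thesis .
qed

lemma kills_all: fixes Sm :: "real mat" assumes N: "N \<in> periods m0" and per: "periodic G (TNpow d T N) u"
  and uc: "\<forall>g\<in>G. u g \<in> carrier_vec d"
  and a: "a \<in> carrier_vec d" and Sm: "Sm \<in> carrier_mat d d"
  and W: "\<forall>g\<in>G. rot g *\<^sub>v u g = a + Sm *\<^sub>v (eact g x0 - x0)"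
  shows "\<forall>y\<in>carrier_vec d2. Sm *\<^sub>v (0\<^sub>v d1 @\<^sub>v y) = 0\<^sub>v d"
proof
  fix y :: "real vec" assume y: "y \<in> carrier_vec d2"
  obtain ts where ts: "set ts \<subseteq> transl_sub d2 S" "length ts = d2" "lin_indep_vecs d2 (map snd ts)"
    using S_space by (auto simp: space_group_def)
  have bi: "Sm *\<^sub>v (0\<^sub>v d1 @\<^sub>v snd (ts ! i)) = 0\<^sub>v d \<and> snd (ts ! i) \<in> carrier_vec d2" if i: "i < d2" for i
  proof -
    have "ts ! i \<in> transl_sub d2 S" using ts i by auto
    then have "ts ! i \<in> eproj d1 d2 ` T" using T_bij by (simp add: bij_betw_def)
    then obtain t where t: "t \<in> T" "eproj d1 d2 t = ts ! i" by (metis imageE)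
    obtain A b where tf: "t = dsum d1 d2 A (1\<^sub>m d2, b)" "A \<in> carrier_mat d1 d1" "b \<in> carrier_vec d2"
      using T_form[OF t(1)] by blast
    have "ts ! i = (1\<^sub>m d2, b)" using t(2) tf eproj_dsum by simp
    then show ?thesis using kills_T[OF N per uc a Sm W t(1) tf] tf by simp
  qed
  have len: "length (map snd ts) + 0 = d2" using ts by simp
  obtain c where c: "\<forall>j. 0 \<le> j \<and> j < d2 \<longrightarrow> y $ j = (\<Sum>i<length (map snd ts). c i * map snd ts ! i $ j)"
    using LA_span[OF ts(3) len] by auto
  have yc: "\<forall>l<d. (0\<^sub>v d1 @\<^sub>v y) $ l = (\<Sum>i\<in>{..<d2}. c i * (0\<^sub>v d1 @\<^sub>v snd (ts ! i)) $ l)"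
  proof (intro allI impI)
    fix l assume l: "l < d"
    show "(0\<^sub>v d1 @\<^sub>v y) $ l = (\<Sum>i\<in>{..<d2}. c i * (0\<^sub>v d1 @\<^sub>v snd (ts ! i)) $ l)"
    proof (cases "l < d1")
      case True
      then show ?thesis using y bi l d_def by (auto intro!: sum.neutral)
    next
      case False
      then have "l - d1 < d2" using l d_def by simp
      then have "y $ (l - d1) = (\<Sum>i<d2. c i * snd (ts ! i) $ (l - d1))" using c ts by simp
      moreover have "(\<Sum>i\<in>{..<d2}. c i * (0\<^sub>v d1 @\<^sub>v snd (ts ! i)) $ l) = (\<Sum>i<d2. c i * snd (ts ! i) $ (l - d1))"
      proof (intro sum.cong refl)
        fix x assume "x \<in> {..<d2}"
        then have xc: "snd (ts ! x) \<in> carrier_vec d2" using bi by auto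
        then show "c x * (0\<^sub>v d1 @\<^sub>v snd (ts ! x)) $ l = c x * snd (ts ! x) $ (l - d1)"
          using False l d_def by simp
      qed
      ultimately show ?thesis using y False l d_def by simp
    qed
  qed
  have xc: "\<forall>i\<in>{..<d2}. 0\<^sub>v d1 @\<^sub>v snd (ts ! i) \<in> carrier_vec d" using bi d_def by auto
  have y'c: "0\<^sub>v d1 @\<^sub>v y \<in> carrier_vec d" using y d_def by auto
  have "\<forall>k<d. (Sm *\<^sub>v (0\<^sub>v d1 @\<^sub>v y)) $ k = (\<Sum>i\<in>{..<d2}. c i * (Sm *\<^sub>v (0\<^sub>v d1 @\<^sub>v snd (ts ! i))) $ k)"
    by (rule lin_comb_mv[OF Sm _ xc y'c yc]) simp
  then have "\<forall>k<d. (Sm *\<^sub>v (0\<^sub>v d1 @\<^sub>v y)) $ k = 0" using bi by simp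
  then show "Sm *\<^sub>v (0\<^sub>v d1 @\<^sub>v y) = 0\<^sub>v d" using Sm by (intro eq_vecI) auto
qed

lemma ker_sub: assumes u: "u \<in> kerR d G T m0 C x0 R" shows "u \<in> U_iso00 d1 d2 G x0"
proof -
  obtain N where N: "N \<in> periods m0" "periodic G (TNpow d T N) u"
    "\<forall>g\<in>G. restrict (\<lambda>h. u (emult g h)) R \<in> U_iso d x0 R" using ker_local[OF u] by blast
  have uc: "\<forall>g\<in>G. u g \<in> carrier_vec d" and ue: "u \<in> extensional G"
    using u unfolding kerR_def U_per_def by auto
  obtain a Sm where aS: "a \<in> carrier_vec d" "Sm \<in> skew d" "\<forall>g\<in>G. rot g *\<^sub>v u g = a + Sm *\<^sub>v (eact g x0 - x0)"
    using global[OF uc N(3)] by blast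
  have Sc: "Sm \<in> carrier_mat d d" and ST: "Sm\<^sup>T = - Sm" using aS(2) by (auto simp: skew_def)
  have K: "\<forall>y\<in>carrier_vec d2. Sm *\<^sub>v (0\<^sub>v d1 @\<^sub>v y) = 0\<^sub>v d" using kills_all[OF N(1,2) uc aS(1) Sc aS(3)] .
  have anti: "Sm $$ (i, j) = - Sm $$ (j, i)" if "i < d" "j < d" for i j
  proof -
    have "Sm\<^sup>T $$ (j, i) = (- Sm) $$ (j, i)" using ST by simp
    then show ?thesis using that Sc by simp
  qed
  define S1 where "S1 = mat d1 d1 (\<lambda>(i, j). Sm $$ (i, j))"
  have S1c: "S1 \<in> carrier_mat d1 d1" by (simp add: S1_def)
  have eqS: "mdsum S1 (0\<^sub>m d2 d2) = Sm"
  proof (rule eq_matI)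
    fix i j assume i: "i < dim_row Sm" and j: "j < dim_col Sm"
    then have i': "i < d" and j': "j < d" using Sc by auto
    have i'': "i < d1 + d2" and j'': "j < d1 + d2" using i' j' d_def by auto
    have idx: "mdsum S1 (0\<^sub>m d2 d2) $$ (i, j) = (if i < d1 then (if j < d1 then S1 $$ (i, j) else 0)
      else (if j < d1 then 0 else 0\<^sub>m d2 d2 $$ (i - d1, j - d1)))"
      using mdsum_index[OF S1c _ i'' j''] by simp
    show "mdsum S1 (0\<^sub>m d2 d2) $$ (i, j) = Sm $$ (i, j)"
    proof (cases "d1 \<le> j")
      case True
      have "Sm $$ (i, j) = 0" using col_zero[OF Sc K i' True j'] .
      moreover have "mdsum S1 (0\<^sub>m d2 d2) $$ (i, j) = 0" using idx True i'' j'' by simp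
      ultimately show ?thesis by simp
    next
      case False
      show ?thesis
      proof (cases "d1 \<le> i")
        case True
        have "Sm $$ (j, i) = 0" using col_zero[OF Sc K j' True i'] .
        then have "Sm $$ (i, j) = 0" using anti[OF i' j'] by simp
        moreover have "mdsum S1 (0\<^sub>m d2 d2) $$ (i, j) = 0" using idx True False by simp
        ultimately show ?thesis by simp
      next
        case False2: False
        then show ?thesis using idx False by (simp add: S1_def)
      qed
    qed
  next
    show "dim_row (mdsum S1 (0\<^sub>m d2 d2)) = dim_row Sm" "dim_col (mdsum S1 (0\<^sub>m d2 d2)) = dim_col Sm"
      using mdsum_carrier[OF S1c, of "0\<^sub>m d2 d2" d2] Sc d_def by auto
  qed
  have "S1\<^sup>T = - S1"
  proof (rule eq_matI)
    fix i j assume "i < dim_row (- S1)" "j < dim_col (- S1)"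
    then have ij: "i < d1" "j < d1" by (auto simp: S1_def)
    then have "i < d" "j < d" using d_def by auto
    then have "Sm $$ (i, j) = - Sm $$ (j, i)" using anti by blast
    then show "S1\<^sup>T $$ (i, j) = (- S1) $$ (i, j)" using ij by (simp add: S1_def)
  qed (auto simp: S1_def)
  then have S1s: "S1 \<in> skew d1" using S1c by (simp add: skew_def)
  have "\<forall>g\<in>G. rot g *\<^sub>v u g = a + mdsum S1 (0\<^sub>m d2 d2) *\<^sub>v (eact g x0 - x0)" using aS(3) eqS by simp
  moreover have "\<forall>g\<in>G. u g \<in> carrier_vec (d1 + d2)" "a \<in> carrier_vec (d1 + d2)" using uc aS(1) d_def by auto
  ultimately show ?thesis unfolding U_iso00_def mem_Collect_eq
  proof (intro conjI ue)
    assume A1: "\<forall>g\<in>G. rot g *\<^sub>v u g = a + mdsum S1 (0\<^sub>m d2 d2) *\<^sub>v (eact g x0 - x0)"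
      and A2: "\<forall>g\<in>G. u g \<in> carrier_vec (d1 + d2)" "a \<in> carrier_vec (d1 + d2)"
    show "\<forall>g\<in>G. u g \<in> carrier_vec (d1 + d2)" using A2(1) .
    show "\<exists>a\<in>carrier_vec (d1 + d2). \<exists>S\<in>skew d1. \<forall>g\<in>G. rot g *\<^sub>v u g = a + mdsum S (0\<^sub>m d2 d2) *\<^sub>v (eact g x0 - x0)"
      using A1 A2(2) S1s by blast
  qed
qed

end

context cor_setting begin

lemma u_of_W: assumes x: "x \<in> G" and uc: "u x \<in> carrier_vec d" and w: "rot x *\<^sub>v u x = w"
  shows "u x = (rot x)\<^sup>T *\<^sub>v w"
proof -
  have "(rot x)\<^sup>T *\<^sub>v w = ((rot x)\<^sup>T * rot x) *\<^sub>v u x" using w G_rotc[OF x] uc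
    by (subst assoc_mult_mat_vec[of _ d d _ d]) auto
  also have "\<dots> = u x" using G_rotTr[OF x] uc by simp
  finally show ?thesis by simp
qed

lemma rot_block: assumes g: "g \<in> G" and v: "v \<in> carrier_vec d2"
  shows "\<exists>w\<in>carrier_vec d2. rot g *\<^sub>v (0\<^sub>v d1 @\<^sub>v v) = 0\<^sub>v d1 @\<^sub>v w"
proof -
  obtain A B b where f: "g = dsum d1 d2 A (B, b)" "A \<in> carrier_mat d1 d1" "B \<in> carrier_mat d2 d2"
    using G_form[OF g] by blast
  have c: "0\<^sub>v d1 @\<^sub>v v \<in> carrier_vec (d1 + d2)" using v by simp
  have "rot g *\<^sub>v (0\<^sub>v d1 @\<^sub>v v) = (A *\<^sub>v vec_first (0\<^sub>v d1 @\<^sub>v v) d1) @\<^sub>v (B *\<^sub>v vec_last (0\<^sub>v d1 @\<^sub>v v) d2)"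
    unfolding rot_def f(1) by (rule dsum_mv[OF f(2) f(3) c])
  moreover have "vec_first (0\<^sub>v d1 @\<^sub>v v) d1 = 0\<^sub>v d1" by (intro eq_vecI) (auto simp: vec_first_def)
  moreover have "vec_last (0\<^sub>v d1 @\<^sub>v v) d2 = v" using v by (intro eq_vecI) (auto simp: vec_last_def)
  ultimately have "rot g *\<^sub>v (0\<^sub>v d1 @\<^sub>v v) = 0\<^sub>v d1 @\<^sub>v (B *\<^sub>v v)" using f(2) by simp
  then show ?thesis using f(3) v by auto
qed

lemma mdsum_kill: fixes S1 :: "real mat"
  assumes S1: "S1 \<in> carrier_mat d1 d1" and w: "w \<in> carrier_vec d2"
  shows "mdsum S1 (0\<^sub>m d2 d2) *\<^sub>v (0\<^sub>v d1 @\<^sub>v w) = 0\<^sub>v d"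
proof -
  have "mdsum S1 (0\<^sub>m d2 d2) *\<^sub>v (0\<^sub>v d1 @\<^sub>v w) = four_block_mat S1 (0\<^sub>m d1 d2) (0\<^sub>m d2 d1) (0\<^sub>m d2 d2) *\<^sub>v (0\<^sub>v d1 @\<^sub>v w)"
    using S1 by (simp add: mdsum_def)
  also have "\<dots> = (S1 *\<^sub>v 0\<^sub>v d1 + 0\<^sub>m d1 d2 *\<^sub>v w) @\<^sub>v (0\<^sub>m d2 d1 *\<^sub>v 0\<^sub>v d1 + 0\<^sub>m d2 d2 *\<^sub>v w)"
    using S1 w by (intro four_block_mat_mult_vec) auto
  also have "\<dots> = 0\<^sub>v d1 @\<^sub>v 0\<^sub>v d2" using S1 w by simp
  also have "\<dots> = 0\<^sub>v d" using d_def by (intro eq_vecI) auto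
  finally show ?thesis .
qed

lemma eact_split: assumes g: "g \<in> G" and y: "y \<in> carrier_vec d"
  shows "eact g y - x0 = (eact g x0 - x0) + rot g *\<^sub>v (y - x0)"
proof -
  have Rc: "rot g \<in> carrier_mat d d" using G_rotc[OF g] .
  have "rot g *\<^sub>v (y - x0) = rot g *\<^sub>v y - rot g *\<^sub>v x0" using Rc y x0_carrier by (simp add: mult_minus_distrib_mat_vec)
  then show ?thesis using Rc y x0_carrier G_snd[OF g] unfolding eact_def rot_def
    by (intro eq_vecI) auto
qed

lemma fdist_self: assumes "\<forall>h\<in>R. v h \<in> carrier_vec d" shows "fdist R v v = 0"
proof -
  have "\<forall>h\<in>R. (v h - v h) \<bullet> (v h - v h) = 0"
  proof
    fix h assume "h \<in> R"
    then have "v h - v h = 0\<^sub>v d" using assms by (intro eq_vecI) auto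
    then show "(v h - v h) \<bullet> (v h - v h) = 0" by simp
  qed
  then show ?thesis unfolding fdist_def by simp
qed

lemma setdist_mem: assumes v: "v \<in> U_iso d x0 R" shows "setdist R v (U_iso d x0 R) = 0"
proof -
  have vc: "\<forall>h\<in>R. v h \<in> carrier_vec d" using v unfolding U_iso_def by blast
  have "Inf {fdist R v w | w. w \<in> U_iso d x0 R} = 0"
  proof (rule cInf_eq_minimum)
    show "0 \<in> {fdist R v w | w. w \<in> U_iso d x0 R}" using v fdist_self[OF vc] by force
    show "\<And>x. x \<in> {fdist R v w | w. w \<in> U_iso d x0 R} \<Longrightarrow> 0 \<le> x" using fdist_nonneg by blast
  qed
  then show ?thesis unfolding setdist_def .
qed

lemma skew_conj: fixes M Q :: "real mat"
  assumes M: "M \<in> skew d" and Q: "Q \<in> carrier_mat d d"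
  shows "Q\<^sup>T * M * Q \<in> skew d"
proof -
  have Mc: "M \<in> carrier_mat d d" and MT: "M\<^sup>T = - M" using M by (auto simp: skew_def)
  have c: "Q\<^sup>T * M * Q \<in> carrier_mat d d" using Mc Q by simp
  have "(Q\<^sup>T * M * Q)\<^sup>T = Q\<^sup>T * (Q\<^sup>T * M)\<^sup>T" using Mc Q by (simp add: transpose_mult[of _ d d _ d])
  also have "(Q\<^sup>T * M)\<^sup>T = M\<^sup>T * Q" using Mc Q by (simp add: transpose_mult[of _ d d _ d])
  also have "Q\<^sup>T * (M\<^sup>T * Q) = - (Q\<^sup>T * M * Q)" unfolding MT using Mc Q
    by (simp add: assoc_mult_mat[of _ d d _ d _ d])
  finally show ?thesis using c by (simp add: skew_def)
qed

lemma iso_transfer: fixes Sm :: "real mat"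
  assumes g: "g \<in> G" and uc: "\<forall>x\<in>G. u x \<in> carrier_vec d"
  and a: "a \<in> carrier_vec d" and Ss: "Sm \<in> skew d"
  and W: "\<forall>x\<in>G. rot x *\<^sub>v u x = a + Sm *\<^sub>v (eact x x0 - x0)"
  shows "restrict (\<lambda>h. u (emult g h)) R \<in> U_iso d x0 R"
proof -
  have Sc: "Sm \<in> carrier_mat d d" using Ss by (simp add: skew_def)
  let ?R = "rot g"
  have Rc: "?R \<in> carrier_mat d d" using G_rotc[OF g] .
  let ?ag = "?R\<^sup>T *\<^sub>v (a + Sm *\<^sub>v (eact g x0 - x0))"
  let ?Sg = "?R\<^sup>T * Sm * ?R"
  have pc: "eact g x0 - x0 \<in> carrier_vec d" using orbit_carrier[OF g] x0_carrier by simp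
  have agc: "?ag \<in> carrier_vec d" using Rc a Sc pc by simp
  have Sgs: "?Sg \<in> skew d" using skew_conj[OF Ss Rc] .
  have eq: "rot h *\<^sub>v u (emult g h) = ?ag + ?Sg *\<^sub>v (eact h x0 - x0)" if h: "h \<in> R" for h
  proof -
    have hG: "h \<in> G" using h R_G by blast
    have ghG: "emult g h \<in> G" using G_mult[OF g hG] .
    have zc: "eact h x0 - x0 \<in> carrier_vec d" using orbit_carrier[OF hG] x0_carrier by simp
    have ugh: "u (emult g h) \<in> carrier_vec d" using uc ghG by blast
    have rh: "rot h \<in> carrier_mat d d" using G_rotc[OF hG] .
    have "rot h *\<^sub>v u (emult g h) = ?R\<^sup>T *\<^sub>v (rot (emult g h) *\<^sub>v u (emult g h))"
    proof -
      have "?R\<^sup>T *\<^sub>v (rot (emult g h) *\<^sub>v u (emult g h)) = ?R\<^sup>T *\<^sub>v (?R *\<^sub>v (rot h *\<^sub>v u (emult g h)))"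
        using Rc rh ugh by (simp add: rot_emult assoc_mult_mat_vec[of _ d d _ d])
      also have "\<dots> = (?R\<^sup>T * ?R) *\<^sub>v (rot h *\<^sub>v u (emult g h))"
        using Rc rh ugh by (subst assoc_mult_mat_vec[of _ d d _ d]) auto
      also have "\<dots> = rot h *\<^sub>v u (emult g h)" using G_rotTr[OF g] rh ugh by simp
      finally show ?thesis by simp
    qed
    also have "rot (emult g h) *\<^sub>v u (emult g h) = a + Sm *\<^sub>v (eact (emult g h) x0 - x0)" using W ghG by blast
    also have "eact (emult g h) x0 - x0 = (eact g x0 - x0) + ?R *\<^sub>v (eact h x0 - x0)"
      using G_eact_mult[OF g hG x0_carrier] eact_split[OF g orbit_carrier[OF hG]] by simp
    also have "a + Sm *\<^sub>v ((eact g x0 - x0) + ?R *\<^sub>v (eact h x0 - x0)) =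
       (a + Sm *\<^sub>v (eact g x0 - x0)) + Sm *\<^sub>v (?R *\<^sub>v (eact h x0 - x0))"
      using Sc Rc pc zc a by (simp add: mult_add_distrib_mat_vec[of _ d d] assoc_add_vec[of _ d])
    also have "?R\<^sup>T *\<^sub>v ((a + Sm *\<^sub>v (eact g x0 - x0)) + Sm *\<^sub>v (?R *\<^sub>v (eact h x0 - x0))) =
       ?ag + ?R\<^sup>T *\<^sub>v (Sm *\<^sub>v (?R *\<^sub>v (eact h x0 - x0)))"
      using Sc Rc pc zc a by (subst mult_add_distrib_mat_vec[of _ d d]) auto
    also have "?R\<^sup>T *\<^sub>v (Sm *\<^sub>v (?R *\<^sub>v (eact h x0 - x0))) = ?Sg *\<^sub>v (eact h x0 - x0)"
      using Sc Rc zc by (simp add: assoc_mult_mat_vec[of _ d d _ d])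
    finally show ?thesis .
  qed
  have "\<forall>h\<in>R. restrict (\<lambda>h. u (emult g h)) R h \<in> carrier_vec d"
  proof
    fix h assume h: "h \<in> R"
    then have "emult g h \<in> G" using G_mult[OF g] R_G by blast
    then show "restrict (\<lambda>h. u (emult g h)) R h \<in> carrier_vec d" using uc h by simp
  qed
  moreover have "\<forall>h\<in>R. rot h *\<^sub>v restrict (\<lambda>h. u (emult g h)) R h = ?ag + ?Sg *\<^sub>v (eact h x0 - x0)"
    using eq by simp
  ultimately show ?thesis unfolding U_iso_def using agc Sgs by blast
qed

lemma iso00_sub_ker: assumes u: "u \<in> U_iso00 d1 d2 G x0" shows "u \<in> kerR d G T m0 C x0 R"
proof -
  obtain a S1 where aS: "a \<in> carrier_vec d" "S1 \<in> skew d1"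
    "\<forall>g\<in>G. rot g *\<^sub>v u g = a + mdsum S1 (0\<^sub>m d2 d2) *\<^sub>v (eact g x0 - x0)"
    and ue: "u \<in> extensional G" and uc: "\<forall>g\<in>G. u g \<in> carrier_vec d"
    using u d_def unfolding U_iso00_def by auto
  let ?S = "mdsum S1 (0\<^sub>m d2 d2)"
  have S1c: "S1 \<in> carrier_mat d1 d1" and S1T: "S1\<^sup>T = - S1" using aS(2) by (auto simp: skew_def)
  have Sc: "?S \<in> carrier_mat d d" using mdsum_carrier[OF S1c, of "0\<^sub>m d2 d2" d2] d_def by simp
  have "?S\<^sup>T = - ?S"
  proof (rule eq_matI)
    fix i j assume "i < dim_row (- ?S)" "j < dim_col (- ?S)"
    then have i: "i < d1 + d2" and j: "j < d1 + d2" using Sc d_def by auto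
    have "S1\<^sup>T $$ (j, i) = (- S1) $$ (j, i)" if "i < d1" "j < d1" using S1T by simp
    then show "?S\<^sup>T $$ (i, j) = (- ?S) $$ (i, j)"
      using mdsum_index[OF S1c _ i j, of "0\<^sub>m d2 d2"] mdsum_index[OF S1c _ j i, of "0\<^sub>m d2 d2"] i j S1c Sc d_def
      by auto
  qed (use Sc in auto)
  then have Ss: "?S \<in> skew d" using Sc by (simp add: skew_def)
  define N where "N = m0 * Kf"
  have N: "N \<in> periods m0" using m0_pos Kf_pos by (simp add: N_def periods_def)
  have per: "periodic G (TNpow d T N) u" unfolding periodic_def
  proof (intro ballI)
    fix g t' assume g: "g \<in> G" and t': "t' \<in> TNpow d T N"
    then obtain t where t: "t \<in> T" "t' = epow d t N" unfolding TNpow_def by blast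
    have tG: "t \<in> G" using t T_sub by blast
    have t'G: "t' \<in> G" using epow_G[OF tG] t by simp
    have gt: "emult g t' \<in> G" using G_mult[OF g t'G] .
    have rt: "rot t' = 1\<^sub>m d" unfolding t(2) by (rule rot_epow_Kf[OF tG]) (simp add: N_def)
    obtain A b where tf: "t = dsum d1 d2 A (1\<^sub>m d2, b)" "A \<in> carrier_mat d1 d1" "b \<in> carrier_vec d2"
      using T_form[OF t(1)] by blast
    have st: "snd t' = 0\<^sub>v d1 @\<^sub>v (real N \<cdot>\<^sub>v b)" unfolding t(2) using epow_transl_snd[OF tf(2) tf(3)] tf(1) d_def by simp
    have et: "eact t' x0 = x0 + snd t'" using rt x0_carrier unfolding eact_def rot_def by simp
    have stc: "snd t' \<in> carrier_vec d" using G_snd[OF t'G] .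
    obtain w where w: "w \<in> carrier_vec d2" "rot g *\<^sub>v snd t' = 0\<^sub>v d1 @\<^sub>v w"
      using rot_block[OF g, of "real N \<cdot>\<^sub>v b"] st tf(3) by auto
    have "eact (emult g t') x0 - x0 = (eact g x0 - x0) + rot g *\<^sub>v (eact t' x0 - x0)"
      using G_eact_mult[OF g t'G x0_carrier] eact_split[OF g orbit_carrier[OF t'G]] by simp
    also have "eact t' x0 - x0 = snd t'" using et stc x0_carrier by (intro eq_vecI) auto
    finally have e1: "eact (emult g t') x0 - x0 = (eact g x0 - x0) + (0\<^sub>v d1 @\<^sub>v w)" using w by simp
    have pc: "eact g x0 - x0 \<in> carrier_vec d" using orbit_carrier[OF g] x0_carrier by simp
    have wc: "0\<^sub>v d1 @\<^sub>v w \<in> carrier_vec d" using w d_def by simp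
    have "?S *\<^sub>v (eact (emult g t') x0 - x0) = ?S *\<^sub>v (eact g x0 - x0) + ?S *\<^sub>v (0\<^sub>v d1 @\<^sub>v w)"
      unfolding e1 using Sc pc wc by (simp add: mult_add_distrib_mat_vec[of _ d d])
    also have "?S *\<^sub>v (0\<^sub>v d1 @\<^sub>v w) = 0\<^sub>v d" using mdsum_kill[OF S1c w(1)] .
    finally have "?S *\<^sub>v (eact (emult g t') x0 - x0) = ?S *\<^sub>v (eact g x0 - x0)" using Sc pc by simp
    then have "rot (emult g t') *\<^sub>v u (emult g t') = a + ?S *\<^sub>v (eact g x0 - x0)" using aS(3) gt by simp
    moreover have "rot (emult g t') = rot g" using rt G_rotc[OF g] by (simp add: rot_emult)
    ultimately have "u (emult g t') = (rot g)\<^sup>T *\<^sub>v (a + ?S *\<^sub>v (eact g x0 - x0))"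
      using u_of_W[OF gt] uc gt by simp
    also have "\<dots> = u g"
    proof -
      have "u g = (rot g)\<^sup>T *\<^sub>v (a + ?S *\<^sub>v (eact g x0 - x0))"
        by (rule u_of_W[OF g]) (use uc g aS(3) in auto)
      then show ?thesis by simp
    qed
    finally show "u (emult g t') = u g" .
  qed
  have W: "\<forall>x\<in>G. rot x *\<^sub>v u x = a + ?S *\<^sub>v (eact x x0 - x0)" using aS(3) .
  have sd: "\<forall>c\<in>C N. setdist R (restrict (\<lambda>h. u (emult c h)) R) (U_iso d x0 R) = 0"
  proof
    fix c assume "c \<in> C N"
    then have "c \<in> G" using C_reps N by blast
    then show "setdist R (restrict (\<lambda>h. u (emult c h)) R) (U_iso d x0 R) = 0"
      using setdist_mem iso_transfer[OF _ uc aS(1) Ss W] by blast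
  qed
  have "seminormR d x0 R (C N) u = 0" unfolding seminormR_def using sd by simp
  moreover have "u \<in> U_per d G T m0" unfolding U_per_def using ue uc N per by blast
  ultimately show ?thesis unfolding kerR_def using N per by blast
qed

lemma ker_eq: "kerR d G T m0 C x0 R = U_iso00 d1 d2 G x0"
  using ker_sub iso00_sub_ker by blast

end

lemma arith_nat: fixes x y z n :: nat assumes e: "x + y = z"
  shows "n + x * y + y * (y - 1) div 2 = n + y * (x + z - 1) div 2"
proof (cases y)
  case 0 then show ?thesis by simp
next
  case (Suc k)
  have z: "z = x + Suc k" using e Suc by simp
  have "y * (x + z - 1) = 2 * (x * y) + y * (y - 1)" unfolding z Suc by (simp add: algebra_simps)
  then show ?thesis by simp
qed

definition Bg :: "nat \<Rightarrow> real mat \<Rightarrow> real mat \<Rightarrow> real mat" where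
  "Bg n3 A1 A2 = four_block_mat (0\<^sub>m n3 n3) A1 (- A1\<^sup>T) A2"

lemma Bg_carrier: "A1 \<in> carrier_mat n3 n4 \<Longrightarrow> A2 \<in> carrier_mat n4 n4 \<Longrightarrow> Bg n3 A1 A2 \<in> carrier_mat (n3 + n4) (n3 + n4)"
  unfolding Bg_def by (rule four_block_carrier_mat) auto

lemma Bg_index: assumes A1: "A1 \<in> carrier_mat n3 n4" and A2: "A2 \<in> carrier_mat n4 n4"
  and i: "i < n3 + n4" and j: "j < n3 + n4"
  shows "Bg n3 A1 A2 $$ (i, j) = (if i < n3 then (if j < n3 then 0 else A1 $$ (i, j - n3))
     else (if j < n3 then - A1 $$ (j, i - n3) else A2 $$ (i - n3, j - n3)))"
  using A1 A2 i j by (auto simp: Bg_def)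

lemma Bg_skew: assumes A1: "A1 \<in> carrier_mat n3 n4" and A2: "A2 \<in> skew n4"
  shows "Bg n3 A1 A2 \<in> skew (n3 + n4)"
proof -
  have A2c: "A2 \<in> carrier_mat n4 n4" and A2T: "A2\<^sup>T = - A2" using A2 by (auto simp: skew_def)
  have c: "Bg n3 A1 A2 \<in> carrier_mat (n3 + n4) (n3 + n4)" using Bg_carrier[OF A1 A2c] .
  have "(Bg n3 A1 A2)\<^sup>T = - Bg n3 A1 A2"
  proof (rule eq_matI)
    fix i j assume "i < dim_row (- Bg n3 A1 A2)" "j < dim_col (- Bg n3 A1 A2)"
    then have i: "i < n3 + n4" and j: "j < n3 + n4" using c by auto
    have a2: "A2 $$ (j - n3, i - n3) = - A2 $$ (i - n3, j - n3)" if "n3 \<le> i" "n3 \<le> j"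
    proof -
      have "A2\<^sup>T $$ (i - n3, j - n3) = (- A2) $$ (i - n3, j - n3)" using A2T by simp
      then show ?thesis using that i j A2c by simp
    qed
    show "(Bg n3 A1 A2)\<^sup>T $$ (i, j) = (- Bg n3 A1 A2) $$ (i, j)"
      using Bg_index[OF A1 A2c i j] Bg_index[OF A1 A2c j i] i j c a2 by auto
  qed (use c in auto)
  then show ?thesis using c by (simp add: skew_def)
qed

lemma Bg_add: assumes A1: "A1 \<in> carrier_mat n3 n4" and A2: "A2 \<in> carrier_mat n4 n4"
  and B1: "B1 \<in> carrier_mat n3 n4" and B2: "B2 \<in> carrier_mat n4 n4"
  shows "Bg n3 (A1 + B1) (A2 + B2) = Bg n3 A1 A2 + Bg n3 B1 B2"
proof (rule eq_matI)
  have AB1: "A1 + B1 \<in> carrier_mat n3 n4" and AB2: "A2 + B2 \<in> carrier_mat n4 n4" using A1 B1 A2 B2 by auto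
  fix i j assume "i < dim_row (Bg n3 A1 A2 + Bg n3 B1 B2)" "j < dim_col (Bg n3 A1 A2 + Bg n3 B1 B2)"
  then have i: "i < n3 + n4" and j: "j < n3 + n4" using Bg_carrier[OF B1 B2] by auto
  show "Bg n3 (A1 + B1) (A2 + B2) $$ (i, j) = (Bg n3 A1 A2 + Bg n3 B1 B2) $$ (i, j)"
    using Bg_index[OF AB1 AB2 i j] Bg_index[OF A1 A2 i j] Bg_index[OF B1 B2 i j] i j A1 B1 A2 B2
      Bg_carrier[OF B1 B2] by auto
qed (use Bg_carrier[OF A1 A2] Bg_carrier[OF B1 B2] A1 B1 A2 B2 Bg_carrier[of "A1 + B1" n3 n4 "A2 + B2"] in auto)

lemma Bg_smult: assumes A1: "A1 \<in> carrier_mat n3 n4" and A2: "A2 \<in> carrier_mat n4 n4"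
  shows "Bg n3 (c \<cdot>\<^sub>m A1) (c \<cdot>\<^sub>m A2) = c \<cdot>\<^sub>m Bg n3 A1 A2"
proof (rule eq_matI)
  have cA1: "c \<cdot>\<^sub>m A1 \<in> carrier_mat n3 n4" and cA2: "c \<cdot>\<^sub>m A2 \<in> carrier_mat n4 n4" using A1 A2 by auto
  fix i j assume "i < dim_row (c \<cdot>\<^sub>m Bg n3 A1 A2)" "j < dim_col (c \<cdot>\<^sub>m Bg n3 A1 A2)"
  then have i: "i < n3 + n4" and j: "j < n3 + n4" using Bg_carrier[OF A1 A2] by auto
  show "Bg n3 (c \<cdot>\<^sub>m A1) (c \<cdot>\<^sub>m A2) $$ (i, j) = (c \<cdot>\<^sub>m Bg n3 A1 A2) $$ (i, j)"
    using Bg_index[OF cA1 cA2 i j] Bg_index[OF A1 A2 i j] i j A1 A2 Bg_carrier[OF A1 A2] by auto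
qed (use Bg_carrier[OF A1 A2] A1 A2 Bg_carrier[of "c \<cdot>\<^sub>m A1" n3 n4 "c \<cdot>\<^sub>m A2"] in auto)

lemma Bg_inj: assumes A1: "A1 \<in> carrier_mat n3 n4" and A2: "A2 \<in> carrier_mat n4 n4"
  and B1: "B1 \<in> carrier_mat n3 n4" and B2: "B2 \<in> carrier_mat n4 n4"
  and eq: "\<forall>i<n3 + n4. \<forall>j. n3 \<le> j \<and> j < n3 + n4 \<longrightarrow> Bg n3 A1 A2 $$ (i, j) = Bg n3 B1 B2 $$ (i, j)"
  shows "A1 = B1 \<and> A2 = B2"
proof
  show "A1 = B1"
  proof (rule eq_matI)
    fix i j assume "i < dim_row B1" "j < dim_col B1"
    then have i: "i < n3" and j: "j < n4" using B1 by auto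
    have ij: "i < n3 + n4" "n3 + j < n3 + n4" using i j by auto
    have "Bg n3 A1 A2 $$ (i, n3 + j) = Bg n3 B1 B2 $$ (i, n3 + j)" using eq ij by simp
    then show "A1 $$ (i, j) = B1 $$ (i, j)" using Bg_index[OF A1 A2 ij] Bg_index[OF B1 B2 ij] i by simp
  qed (use A1 B1 in auto)
  show "A2 = B2"
  proof (rule eq_matI)
    fix i j assume "i < dim_row B2" "j < dim_col B2"
    then have i: "i < n4" and j: "j < n4" using B2 by auto
    have ij: "n3 + i < n3 + n4" "n3 + j < n3 + n4" using i j by auto
    have "Bg n3 A1 A2 $$ (n3 + i, n3 + j) = Bg n3 B1 B2 $$ (n3 + i, n3 + j)" using eq ij by simp
    then show "A2 $$ (i, j) = B2 $$ (i, j)" using Bg_index[OF A1 A2 ij] Bg_index[OF B1 B2 ij] by simp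
  qed (use A2 B2 in auto)
qed

lemma Bg_from_skew: assumes S1: "S1 \<in> skew (n3 + n4)"
  shows "mat n4 n4 (\<lambda>(i, j). S1 $$ (n3 + i, n3 + j)) \<in> skew n4"
    "\<forall>i<n3 + n4. \<forall>j. n3 \<le> j \<and> j < n3 + n4 \<longrightarrow>
       Bg n3 (mat n3 n4 (\<lambda>(i, j). S1 $$ (i, n3 + j))) (mat n4 n4 (\<lambda>(i, j). S1 $$ (n3 + i, n3 + j))) $$ (i, j) = S1 $$ (i, j)"
proof -
  have S1c: "S1 \<in> carrier_mat (n3 + n4) (n3 + n4)" and S1T: "S1\<^sup>T = - S1" using S1 by (auto simp: skew_def)
  let ?A2 = "mat n4 n4 (\<lambda>(i, j). S1 $$ (n3 + i, n3 + j))"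
  let ?A1 = "mat n3 n4 (\<lambda>(i, j). S1 $$ (i, n3 + j))"
  have "?A2\<^sup>T = - ?A2"
  proof (rule eq_matI)
    fix i j assume "i < dim_row (- ?A2)" "j < dim_col (- ?A2)"
    then have i: "i < n4" and j: "j < n4" by auto
    have "S1\<^sup>T $$ (n3 + j, n3 + i) = (- S1) $$ (n3 + j, n3 + i)" using S1T by simp
    then show "?A2\<^sup>T $$ (i, j) = (- ?A2) $$ (i, j)" using i j S1c by simp
  qed auto
  then show "?A2 \<in> skew n4" by (simp add: skew_def)
  show "\<forall>i<n3 + n4. \<forall>j. n3 \<le> j \<and> j < n3 + n4 \<longrightarrow> Bg n3 ?A1 ?A2 $$ (i, j) = S1 $$ (i, j)"
  proof (intro allI impI)
    fix i j assume i: "i < n3 + n4" and j: "n3 \<le> j \<and> j < n3 + n4"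
    have A1c: "?A1 \<in> carrier_mat n3 n4" and A2c: "?A2 \<in> carrier_mat n4 n4" by auto
    show "Bg n3 ?A1 ?A2 $$ (i, j) = S1 $$ (i, j)"
      using Bg_index[OF A1c A2c i, of j] i j by auto
  qed
qed

lemma Md_index: assumes A: "A \<in> carrier_mat n1 n1" and i: "i < n1 + n2" and j: "j < n1 + n2"
  shows "mdsum A (0\<^sub>m n2 n2) $$ (i, j) = (if i < n1 \<and> j < n1 then A $$ (i, j) else (0::real))"
  using mdsum_index[OF A _ i j, of "0\<^sub>m n2 n2"] i j by auto

lemma Md_add: assumes A: "A \<in> carrier_mat n1 n1" and B: "B \<in> carrier_mat n1 n1"
  shows "mdsum (A + B) (0\<^sub>m n2 n2) = mdsum A (0\<^sub>m n2 n2) + mdsum B (0\<^sub>m n2 n2 :: real mat)"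
proof (rule eq_matI)
  fix i j assume "i < dim_row (mdsum A (0\<^sub>m n2 n2) + mdsum B (0\<^sub>m n2 n2 :: real mat))"
    "j < dim_col (mdsum A (0\<^sub>m n2 n2) + mdsum B (0\<^sub>m n2 n2 :: real mat))"
  then have i: "i < n1 + n2" and j: "j < n1 + n2" using mdsum_carrier[OF B, of "0\<^sub>m n2 n2" n2] by auto
  have AB: "A + B \<in> carrier_mat n1 n1" using A B by simp
  show "mdsum (A + B) (0\<^sub>m n2 n2) $$ (i, j) = (mdsum A (0\<^sub>m n2 n2) + mdsum B (0\<^sub>m n2 n2)) $$ (i, j)"
    using Md_index[OF AB i j] Md_index[OF A i j] Md_index[OF B i j] i j mdsum_carrier[OF B, of "0\<^sub>m n2 n2" n2]
      A B by auto
qed (use mdsum_carrier[OF A, of "0\<^sub>m n2 n2" n2] mdsum_carrier[OF B, of "0\<^sub>m n2 n2" n2]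
      mdsum_carrier[of "A + B" n1 "0\<^sub>m n2 n2" n2] A B in auto)

lemma Md_smult: assumes A: "A \<in> carrier_mat n1 n1"
  shows "mdsum (c \<cdot>\<^sub>m A) (0\<^sub>m n2 n2) = c \<cdot>\<^sub>m mdsum A (0\<^sub>m n2 n2 :: real mat)"
proof (rule eq_matI)
  fix i j assume "i < dim_row (c \<cdot>\<^sub>m mdsum A (0\<^sub>m n2 n2 :: real mat))" "j < dim_col (c \<cdot>\<^sub>m mdsum A (0\<^sub>m n2 n2 :: real mat))"
  then have i: "i < n1 + n2" and j: "j < n1 + n2" using mdsum_carrier[OF A, of "0\<^sub>m n2 n2" n2] by auto
  have cA: "c \<cdot>\<^sub>m A \<in> carrier_mat n1 n1" using A by simp
  show "mdsum (c \<cdot>\<^sub>m A) (0\<^sub>m n2 n2) $$ (i, j) = (c \<cdot>\<^sub>m mdsum A (0\<^sub>m n2 n2)) $$ (i, j)"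
    using Md_index[OF cA i j] Md_index[OF A i j] i j mdsum_carrier[OF A, of "0\<^sub>m n2 n2" n2] A by auto
qed (use mdsum_carrier[OF A, of "0\<^sub>m n2 n2" n2] mdsum_carrier[of "c \<cdot>\<^sub>m A" n1 "0\<^sub>m n2 n2" n2] A in auto)

context cor_setting begin

abbreviation "d4 \<equiv> daff - d2"

lemma arith: "d + d3 * d4 + d4 * (d4 - 1) div 2 = d + d4 * (d3 + d1 - 1) div 2"
  using arith_nat[OF dims] .

lemma Bm_carrier: "A1 \<in> carrier_mat d3 d4 \<Longrightarrow> A2 \<in> carrier_mat d4 d4 \<Longrightarrow> Bg d3 A1 A2 \<in> carrier_mat d1 d1"
  using Bg_carrier[of A1 d3 d4 A2] unfolding dims .

abbreviation "Phi \<equiv> PhiMap d2 d3 d4 G x0"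

lemma Phi_eval: "g \<in> G \<Longrightarrow> Phi (a, A1, A2) g = (rot g)\<^sup>T *\<^sub>v (a + mdsum (Bg d3 A1 A2) (0\<^sub>m d2 d2) *\<^sub>v (eact g x0 - x0))"
  by (simp add: PhiMap_def Bg_def)

lemma Phi_ext: "Phi p \<in> extensional G"
  by (cases p) (simp add: PhiMap_def)

lemma M_carrier: "A1 \<in> carrier_mat d3 d4 \<Longrightarrow> A2 \<in> carrier_mat d4 d4 \<Longrightarrow> mdsum (Bg d3 A1 A2) (0\<^sub>m d2 d2) \<in> carrier_mat d d"
  using mdsum_carrier[OF Bm_carrier, of A1 A2 "0\<^sub>m d2 d2" d2] d_def by simp

lemma Phi_in: assumes p: "(a, A1, A2) \<in> param_dom d d3 d4" shows "Phi (a, A1, A2) \<in> U_iso00 d1 d2 G x0"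
proof -
  have a: "a \<in> carrier_vec d" and A1: "A1 \<in> carrier_mat d3 d4" and A2: "A2 \<in> skew d4"
    using p by (auto simp: param_dom_def)
  have A2c: "A2 \<in> carrier_mat d4 d4" using A2 by (simp add: skew_def)
  let ?M = "mdsum (Bg d3 A1 A2) (0\<^sub>m d2 d2)"
  have Mc: "?M \<in> carrier_mat d d" using M_carrier[OF A1 A2c] .
  have wc: "a + ?M *\<^sub>v (eact g x0 - x0) \<in> carrier_vec d" if g: "g \<in> G" for g
    using a Mc orbit_carrier[OF g] x0_carrier by simp
  have "\<forall>g\<in>G. Phi (a, A1, A2) g \<in> carrier_vec d"
  proof
    fix g assume g: "g \<in> G"
    show "Phi (a, A1, A2) g \<in> carrier_vec d" using Phi_eval[OF g] wc[OF g] G_rotc[OF g] by simp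
  qed
  then have "\<forall>g\<in>G. Phi (a, A1, A2) g \<in> carrier_vec (d1 + d2)" using d_def by simp
  moreover have "\<forall>g\<in>G. rot g *\<^sub>v Phi (a, A1, A2) g = a + ?M *\<^sub>v (eact g x0 - x0)"
  proof
    fix g assume g: "g \<in> G"
    have "rot g *\<^sub>v Phi (a, A1, A2) g = (rot g * (rot g)\<^sup>T) *\<^sub>v (a + ?M *\<^sub>v (eact g x0 - x0))"
      using Phi_eval[OF g] G_rotc[OF g] wc[OF g] by (simp add: assoc_mult_mat_vec[of _ d d _ d])
    also have "\<dots> = a + ?M *\<^sub>v (eact g x0 - x0)" using G_rotrT[OF g] wc[OF g] by simp
    finally show "rot g *\<^sub>v Phi (a, A1, A2) g = a + ?M *\<^sub>v (eact g x0 - x0)" .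
  qed
  moreover have "a \<in> carrier_vec (d1 + d2)" using a d_def by simp
  moreover have "Bg d3 A1 A2 \<in> skew d1" using Bg_skew[OF A1 A2] unfolding dims .
  ultimately show ?thesis unfolding U_iso00_def using Phi_ext by blast
qed

lemma col_of: fixes M :: "real mat" assumes M: "M \<in> carrier_mat d d" and k: "k < d" and j: "j < d"
  shows "(M *\<^sub>v unit_vec d j) $ k = M $$ (k, j)"
proof -
  have uc: "unit_vec d j \<in> carrier_vec d" by simp
  have "(M *\<^sub>v unit_vec d j) $ k = (\<Sum>l<d. M $$ (k, l) * unit_vec d j $ l)" using mv_index[OF M uc k] .
  also have "\<dots> = (\<Sum>l<d. if l = j then M $$ (k, l) else 0)" using j by (intro sum.cong) auto
  also have "\<dots> = M $$ (k, j)" using j by simp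
  finally show ?thesis .
qed

lemma M_cols_eq: fixes M M' :: "real mat"
  assumes M: "M \<in> carrier_mat d d" and M': "M' \<in> carrier_mat d d"
  and eq: "\<forall>g\<in>G. M *\<^sub>v (eact g x0 - x0) = M' *\<^sub>v (eact g x0 - x0)"
  and k: "k < d" and j: "d3 \<le> j" "j < d"
  shows "M $$ (k, j) = M' $$ (k, j)"
proof -
  obtain \<beta> where \<beta>: "\<forall>l<d. unit_vec d j $ l = (\<Sum>h\<in>R. \<beta> h * (eact h x0 - x0) $ l)"
    using span_E[of "unit_vec d j"] j unfolding inspan_def by auto
  have xc: "\<forall>h\<in>R. eact h x0 - x0 \<in> carrier_vec d" using R_G orbit_carrier x0_carrier by auto
  have uc: "unit_vec d j \<in> carrier_vec d" by simp
  have "M $$ (k, j) = (M *\<^sub>v unit_vec d j) $ k" using col_of[OF M k j(2)] by simp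
  also have "\<dots> = (\<Sum>h\<in>R. \<beta> h * (M *\<^sub>v (eact h x0 - x0)) $ k)"
    using lin_comb_mv[OF M R_fin xc uc \<beta>] k by blast
  also have "\<dots> = (\<Sum>h\<in>R. \<beta> h * (M' *\<^sub>v (eact h x0 - x0)) $ k)"
    using eq R_G by (intro sum.cong) auto
  also have "\<dots> = (M' *\<^sub>v unit_vec d j) $ k"
    using lin_comb_mv[OF M' R_fin xc uc \<beta>] k by simp
  also have "\<dots> = M' $$ (k, j)" using col_of[OF M' k j(2)] .
  finally show ?thesis .
qed

lemma Phi_inj: "inj_on Phi (param_dom d d3 d4)"
proof (rule inj_onI)
  fix p q assume p: "p \<in> param_dom d d3 d4" and q: "q \<in> param_dom d d3 d4" and eq: "Phi p = Phi q"
  obtain a A1 A2 where pp: "p = (a, A1, A2)" by (cases p) auto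
  obtain b B1 B2 where qq: "q = (b, B1, B2)" by (cases q) auto
  have a: "a \<in> carrier_vec d" and A1: "A1 \<in> carrier_mat d3 d4" and A2: "A2 \<in> carrier_mat d4 d4"
    using p pp by (auto simp: param_dom_def skew_def)
  have b: "b \<in> carrier_vec d" and B1: "B1 \<in> carrier_mat d3 d4" and B2: "B2 \<in> carrier_mat d4 d4"
    using q qq by (auto simp: param_dom_def skew_def)
  let ?M = "mdsum (Bg d3 A1 A2) (0\<^sub>m d2 d2)"
  let ?M' = "mdsum (Bg d3 B1 B2) (0\<^sub>m d2 d2)"
  have Mc: "?M \<in> carrier_mat d d" using M_carrier[OF A1 A2] .
  have M'c: "?M' \<in> carrier_mat d d" using M_carrier[OF B1 B2] .
  have ev: "Phi p g = Phi q g" for g using eq by simp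
  have z0: "eact (eid d) x0 - x0 = 0\<^sub>v d" using x0_eq x0_carrier by (intro eq_vecI) auto
  have "Phi p (eid d) = a" unfolding pp using Phi_eval[OF G_eid] rot_eid z0 Mc a by simp
  moreover have "Phi q (eid d) = b" unfolding qq using Phi_eval[OF G_eid] rot_eid z0 M'c b by simp
  ultimately have ab: "a = b" using ev by metis
  have Meq: "\<forall>g\<in>G. ?M *\<^sub>v (eact g x0 - x0) = ?M' *\<^sub>v (eact g x0 - x0)"
  proof
    fix g assume g: "g \<in> G"
    have zc: "eact g x0 - x0 \<in> carrier_vec d" using orbit_carrier[OF g] x0_carrier by simp
    have w1: "a + ?M *\<^sub>v (eact g x0 - x0) \<in> carrier_vec d" using a Mc zc by simp
    have w2: "a + ?M' *\<^sub>v (eact g x0 - x0) \<in> carrier_vec d" using a M'c zc by simp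
    have "(rot g)\<^sup>T *\<^sub>v (a + ?M *\<^sub>v (eact g x0 - x0)) = (rot g)\<^sup>T *\<^sub>v (a + ?M' *\<^sub>v (eact g x0 - x0))"
      using ev[of g] Phi_eval[OF g] pp qq ab by simp
    then have "(rot g * (rot g)\<^sup>T) *\<^sub>v (a + ?M *\<^sub>v (eact g x0 - x0)) = (rot g * (rot g)\<^sup>T) *\<^sub>v (a + ?M' *\<^sub>v (eact g x0 - x0))"
      using G_rotc[OF g] w1 w2 by (simp add: assoc_mult_mat_vec[of _ d d _ d])
    then have eqa: "a + ?M *\<^sub>v (eact g x0 - x0) = a + ?M' *\<^sub>v (eact g x0 - x0)" using G_rotrT[OF g] w1 w2 by simp
    show "?M *\<^sub>v (eact g x0 - x0) = ?M' *\<^sub>v (eact g x0 - x0)"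
    proof (rule eq_vecI)
      fix i assume i: "i < dim_vec (?M' *\<^sub>v (eact g x0 - x0))"
      then have i': "i < d" using M'c by simp
      from arg_cong[OF eqa, of "\<lambda>v. v $ i"] show "(?M *\<^sub>v (eact g x0 - x0)) $ i = (?M' *\<^sub>v (eact g x0 - x0)) $ i"
        using i' a Mc M'c zc by simp
    qed (use Mc M'c in simp)
  qed
  have BA: "\<forall>i<d3 + d4. \<forall>j. d3 \<le> j \<and> j < d3 + d4 \<longrightarrow> Bg d3 A1 A2 $$ (i, j) = Bg d3 B1 B2 $$ (i, j)"
  proof (intro allI impI)
    fix i j assume i: "i < d3 + d4" and j: "d3 \<le> j \<and> j < d3 + d4"
    have i1: "i < d1" and j1: "j < d1" using i j unfolding dims by auto
    have i': "i < d1 + d2" and j': "j < d1 + d2" using i1 j1 by auto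
    have jd: "j < d" using j1 d_def by simp
    have "?M $$ (i, j) = ?M' $$ (i, j)" using M_cols_eq[OF Mc M'c Meq _ _ jd] i' j d_def by simp
    then show "Bg d3 A1 A2 $$ (i, j) = Bg d3 B1 B2 $$ (i, j)"
      using Md_index[OF Bm_carrier[OF A1 A2] i' j'] Md_index[OF Bm_carrier[OF B1 B2] i' j'] i1 j1 by simp
  qed
  have "A1 = B1 \<and> A2 = B2" using Bg_inj[OF A1 A2 B1 B2 BA] .
  then show "p = q" using pp qq ab by simp
qed

lemma Phi_surj: assumes u: "u \<in> kerR d G T m0 C x0 R" shows "u \<in> Phi ` param_dom d d3 d4"
proof -
  have u0: "u \<in> U_iso00 d1 d2 G x0" using u ker_eq by simp
  obtain a S1 where aS: "a \<in> carrier_vec d" "S1 \<in> skew d1"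
    "\<forall>g\<in>G. rot g *\<^sub>v u g = a + mdsum S1 (0\<^sub>m d2 d2) *\<^sub>v (eact g x0 - x0)"
    and ue: "u \<in> extensional G" and uc: "\<forall>g\<in>G. u g \<in> carrier_vec d"
    using u0 d_def unfolding U_iso00_def by auto
  have S1s: "S1 \<in> skew (d3 + d4)" using aS(2) unfolding dims .
  have S1c: "S1 \<in> carrier_mat d1 d1" using aS(2) by (simp add: skew_def)
  define A1 where "A1 = mat d3 d4 (\<lambda>(i, j). S1 $$ (i, d3 + j))"
  define A2 where "A2 = mat d4 d4 (\<lambda>(i, j). S1 $$ (d3 + i, d3 + j))"
  have A1c: "A1 \<in> carrier_mat d3 d4" by (simp add: A1_def)
  have A2c: "A2 \<in> carrier_mat d4 d4" by (simp add: A2_def)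
  have A2s: "A2 \<in> skew d4" unfolding A2_def using Bg_from_skew(1)[OF S1s] .
  have BS: "\<forall>i<d3 + d4. \<forall>j. d3 \<le> j \<and> j < d3 + d4 \<longrightarrow> Bg d3 A1 A2 $$ (i, j) = S1 $$ (i, j)"
    unfolding A1_def A2_def using Bg_from_skew(2)[OF S1s] .
  have pd: "(a, A1, A2) \<in> param_dom d d3 d4" using aS(1) A1c A2s by (simp add: param_dom_def)
  let ?M = "mdsum (Bg d3 A1 A2) (0\<^sub>m d2 d2)"
  let ?S = "mdsum S1 (0\<^sub>m d2 d2)"
  have Mc: "?M \<in> carrier_mat d d" using M_carrier[OF A1c A2c] .
  have Sc: "?S \<in> carrier_mat d d" using mdsum_carrier[OF S1c, of "0\<^sub>m d2 d2" d2] d_def by simp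
  have ent: "?S $$ (k, l) = ?M $$ (k, l)" if k: "k < d" and l: "d3 \<le> l" "l < d" for k l
  proof -
    have k': "k < d1 + d2" and l': "l < d1 + d2" using k l d_def by auto
    have "k < d1 \<Longrightarrow> l < d1 \<Longrightarrow> Bg d3 A1 A2 $$ (k, l) = S1 $$ (k, l)" using BS l unfolding dims by auto
    then show ?thesis using Md_index[OF S1c k' l'] Md_index[OF Bm_carrier[OF A1c A2c] k' l'] by auto
  qed
  have "Phi (a, A1, A2) = u"
  proof (rule extensionalityI[OF Phi_ext ue])
    fix g assume g: "g \<in> G"
    have zc: "eact g x0 - x0 \<in> carrier_vec d" using orbit_carrier[OF g] x0_carrier by simp
    have "?S *\<^sub>v (eact g x0 - x0) = ?M *\<^sub>v (eact g x0 - x0)"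
    proof (rule eq_vecI)
      fix k assume "k < dim_vec (?M *\<^sub>v (eact g x0 - x0))"
      then have k: "k < d" using Mc by simp
      have "(?S *\<^sub>v (eact g x0 - x0)) $ k = (\<Sum>l<d. ?S $$ (k, l) * (eact g x0 - x0) $ l)" using mv_index[OF Sc zc k] .
      also have "\<dots> = (\<Sum>l\<in>{d3..<d}. ?S $$ (k, l) * (eact g x0 - x0) $ l)" using sum_E[OF g] .
      also have "\<dots> = (\<Sum>l\<in>{d3..<d}. ?M $$ (k, l) * (eact g x0 - x0) $ l)" using ent k by (intro sum.cong) auto
      also have "\<dots> = (\<Sum>l<d. ?M $$ (k, l) * (eact g x0 - x0) $ l)" using sum_E[OF g] by simp
      also have "\<dots> = (?M *\<^sub>v (eact g x0 - x0)) $ k" using mv_index[OF Mc zc k] by simp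
      finally show "(?S *\<^sub>v (eact g x0 - x0)) $ k = (?M *\<^sub>v (eact g x0 - x0)) $ k" .
    qed (use Sc Mc in simp)
    moreover have "u g = (rot g)\<^sup>T *\<^sub>v (a + ?S *\<^sub>v (eact g x0 - x0))"
      by (rule u_of_W[OF g]) (use uc g aS(3) in auto)
    ultimately show "Phi (a, A1, A2) g = u g" using Phi_eval[OF g] by simp
  qed
  then show ?thesis using pd by force
qed

lemma Phi_bij: "bij_betw Phi (param_dom d d3 d4) (kerR d G T m0 C x0 R)"
proof -
  have "Phi ` param_dom d d3 d4 \<subseteq> kerR d G T m0 C x0 R"
  proof
    fix u assume "u \<in> Phi ` param_dom d d3 d4"
    then obtain p where p: "p \<in> param_dom d d3 d4" "u = Phi p" by blast
    obtain a A1 A2 where pp: "p = (a, A1, A2)" by (cases p) auto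
    show "u \<in> kerR d G T m0 C x0 R" using Phi_in p pp ker_eq by simp
  qed
  then have "Phi ` param_dom d d3 d4 = kerR d G T m0 C x0 R" using Phi_surj by blast
  then show ?thesis using Phi_inj by (simp add: bij_betw_def)
qed

lemma Phi_linear:
  assumes p: "(a, A1, A2) \<in> param_dom d d3 d4" and q: "(b, B1, B2) \<in> param_dom d d3 d4"
  shows "Phi (a + b, A1 + B1, A2 + B2) = restrict (\<lambda>g. Phi (a, A1, A2) g + Phi (b, B1, B2) g) G
    \<and> Phi (c \<cdot>\<^sub>v a, c \<cdot>\<^sub>m A1, c \<cdot>\<^sub>m A2) = restrict (\<lambda>g. c \<cdot>\<^sub>v Phi (a, A1, A2) g) G"
proof -
  have a: "a \<in> carrier_vec d" and A1: "A1 \<in> carrier_mat d3 d4" and A2: "A2 \<in> carrier_mat d4 d4"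
    using p by (auto simp: param_dom_def skew_def)
  have b: "b \<in> carrier_vec d" and B1: "B1 \<in> carrier_mat d3 d4" and B2: "B2 \<in> carrier_mat d4 d4"
    using q by (auto simp: param_dom_def skew_def)
  let ?M = "mdsum (Bg d3 A1 A2) (0\<^sub>m d2 d2)"
  let ?N = "mdsum (Bg d3 B1 B2) (0\<^sub>m d2 d2)"
  let ?P = "mdsum (Bg d3 (A1 + B1) (A2 + B2)) (0\<^sub>m d2 d2)"
  let ?Q = "mdsum (Bg d3 (c \<cdot>\<^sub>m A1) (c \<cdot>\<^sub>m A2)) (0\<^sub>m d2 d2)"
  have Mc: "?M \<in> carrier_mat d d" using M_carrier[OF A1 A2] .
  have Nc: "?N \<in> carrier_mat d d" using M_carrier[OF B1 B2] .
  have PMN: "?P = ?M + ?N"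
    unfolding Bg_add[OF A1 A2 B1 B2] by (rule Md_add[OF Bm_carrier[OF A1 A2] Bm_carrier[OF B1 B2]])
  have QcM: "?Q = c \<cdot>\<^sub>m ?M"
    unfolding Bg_smult[OF A1 A2] by (rule Md_smult[OF Bm_carrier[OF A1 A2]])
  have L1: "Phi (a + b, A1 + B1, A2 + B2) = restrict (\<lambda>g. Phi (a, A1, A2) g + Phi (b, B1, B2) g) G"
  proof (rule extensionalityI[OF Phi_ext])
    show "restrict (\<lambda>g. Phi (a, A1, A2) g + Phi (b, B1, B2) g) G \<in> extensional G" by simp
    fix g assume g: "g \<in> G"
    have zc: "eact g x0 - x0 \<in> carrier_vec d" using orbit_carrier[OF g] x0_carrier by simp
    have Rc: "(rot g)\<^sup>T \<in> carrier_mat d d" using G_rotc[OF g] by simp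
    have v1: "a + ?M *\<^sub>v (eact g x0 - x0) \<in> carrier_vec d" using a Mc zc by simp
    have v2: "b + ?N *\<^sub>v (eact g x0 - x0) \<in> carrier_vec d" using b Nc zc by simp
    have m1: "?M *\<^sub>v (eact g x0 - x0) \<in> carrier_vec d" and m2: "?N *\<^sub>v (eact g x0 - x0) \<in> carrier_vec d"
      using Mc Nc zc by auto
    have "a + b + ?P *\<^sub>v (eact g x0 - x0) = a + b + (?M *\<^sub>v (eact g x0 - x0) + ?N *\<^sub>v (eact g x0 - x0))"
      unfolding PMN using Mc Nc zc by (simp add: add_mult_distrib_mat_vec[of _ d d])
    also have "\<dots> = (a + ?M *\<^sub>v (eact g x0 - x0)) + (b + ?N *\<^sub>v (eact g x0 - x0))"
      using a b m1 m2 by (intro eq_vecI) auto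
    finally have "Phi (a + b, A1 + B1, A2 + B2) g = (rot g)\<^sup>T *\<^sub>v ((a + ?M *\<^sub>v (eact g x0 - x0)) + (b + ?N *\<^sub>v (eact g x0 - x0)))"
      using Phi_eval[OF g] by simp
    also have "\<dots> = Phi (a, A1, A2) g + Phi (b, B1, B2) g"
      using Phi_eval[OF g] Rc v1 v2 by (simp add: mult_add_distrib_mat_vec[of _ d d])
    finally show "Phi (a + b, A1 + B1, A2 + B2) g = restrict (\<lambda>g. Phi (a, A1, A2) g + Phi (b, B1, B2) g) G g"
      using g by simp
  qed
  have L2: "Phi (c \<cdot>\<^sub>v a, c \<cdot>\<^sub>m A1, c \<cdot>\<^sub>m A2) = restrict (\<lambda>g. c \<cdot>\<^sub>v Phi (a, A1, A2) g) G"
  proof (rule extensionalityI[OF Phi_ext])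
    show "restrict (\<lambda>g. c \<cdot>\<^sub>v Phi (a, A1, A2) g) G \<in> extensional G" by simp
    fix g assume g: "g \<in> G"
    have zc: "eact g x0 - x0 \<in> carrier_vec d" using orbit_carrier[OF g] x0_carrier by simp
    have Rc: "(rot g)\<^sup>T \<in> carrier_mat d d" using G_rotc[OF g] by simp
    have v1: "a + ?M *\<^sub>v (eact g x0 - x0) \<in> carrier_vec d" using a Mc zc by simp
    have m1: "?M *\<^sub>v (eact g x0 - x0) \<in> carrier_vec d" using Mc zc by auto
    have "c \<cdot>\<^sub>v a + ?Q *\<^sub>v (eact g x0 - x0) = c \<cdot>\<^sub>v a + c \<cdot>\<^sub>v (?M *\<^sub>v (eact g x0 - x0))"
      unfolding QcM using smult_mv[OF Mc zc, of c] by simp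
    also have "\<dots> = c \<cdot>\<^sub>v (a + ?M *\<^sub>v (eact g x0 - x0))"
      using a m1 Mc carrier_vecD[OF a] by (intro eq_vecI) (auto simp: algebra_simps)
    finally have "Phi (c \<cdot>\<^sub>v a, c \<cdot>\<^sub>m A1, c \<cdot>\<^sub>m A2) g = (rot g)\<^sup>T *\<^sub>v (c \<cdot>\<^sub>v (a + ?M *\<^sub>v (eact g x0 - x0)))"
      using Phi_eval[OF g] by simp
    also have "\<dots> = c \<cdot>\<^sub>v Phi (a, A1, A2) g"
      using Phi_eval[OF g] mult_mat_vec[OF Rc v1] by simp
    finally show "Phi (c \<cdot>\<^sub>v a, c \<cdot>\<^sub>m A1, c \<cdot>\<^sub>m A2) g = restrict (\<lambda>g. c \<cdot>\<^sub>v Phi (a, A1, A2) g) G g"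
      using g by simp
  qed
  show ?thesis using L1 L2 by blast
qed

end

theorem corollary3p28:
  fixes d1 d2 d daff m0 :: nat
    and S G T R :: "euc set"
    and C :: "nat \<Rightarrow> euc set"
    and x0 :: "real vec"
  assumes d_def: "d = d1 + d2"
    and S_space: "space_group d2 S"
    and G_discrete: "discrete_esubgroup d G"
    and G_sub: "G \<subseteq> {dsum d1 d2 A s | A s. A \<in> orth_group d1 \<and> s \<in> S}"
    and G_onto: "\<forall>s\<in>S. \<exists>g\<in>G. eproj d1 d2 g = s"
    and T_sub: "T \<subseteq> G"
    and T_bij: "bij_betw (eproj d1 d2) T (transl_sub d2 S)"
    and m0_pos: "m0 \<ge> 1"
    and TN_normal: "\<forall>N\<ge>1. enormal d (TNpow d T N) G \<longleftrightarrow> m0 dvd N"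
    and C_reps: "\<forall>N\<in>periods m0. C N \<subseteq> G \<and> finite (C N) \<and>
                   (\<forall>g\<in>G. \<exists>!c. c \<in> C N \<and> (\<exists>t\<in>TNpow d T N. g = emult c t))"
    and x0_carrier: "x0 \<in> carrier_vec d"
    and x0_inj: "inj_on (\<lambda>g. eact g x0) G"
    and daff_def: "daff = affdim d ((\<lambda>g. eact g x0) ` G)"
    and orbit_zero: "\<forall>g\<in>G. \<forall>i<d - daff. eact g x0 $ i = 0"
    and G_trivial: "\<forall>g\<in>G. \<forall>y\<in>carrier_vec d. (\<forall>i. d - daff \<le> i \<and> i < d \<longrightarrow> y $ i = 0)
                        \<longrightarrow> rot g *\<^sub>v y = y"
    and rot_finite: "finite (rot ` G)"
    and R_prop2: "property2 d x0 G R"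
  shows "kerR d G T m0 C x0 R = U_iso00 d1 d2 G x0
    \<and> bij_betw (PhiMap d2 (d - daff) (daff - d2) G x0)
               (param_dom d (d - daff) (daff - d2)) (kerR d G T m0 C x0 R)
    \<and> (\<forall>a A1 A2 b B1 B2 c.
          (a, A1, A2) \<in> param_dom d (d - daff) (daff - d2) \<longrightarrow>
          (b, B1, B2) \<in> param_dom d (d - daff) (daff - d2) \<longrightarrow>
          PhiMap d2 (d - daff) (daff - d2) G x0 (a + b, A1 + B1, A2 + B2)
            = restrict (\<lambda>g. PhiMap d2 (d - daff) (daff - d2) G x0 (a, A1, A2) g
                          + PhiMap d2 (d - daff) (daff - d2) G x0 (b, B1, B2) g) G
          \<and> PhiMap d2 (d - daff) (daff - d2) G x0 (c \<cdot>\<^sub>v a, c \<cdot>\<^sub>m A1, c \<cdot>\<^sub>m A2)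
            = restrict (\<lambda>g. c \<cdot>\<^sub>v PhiMap d2 (d - daff) (daff - d2) G x0 (a, A1, A2) g) G)
    \<and> d + (d - daff) * (daff - d2) + (daff - d2) * (daff - d2 - 1) div 2
        = d + (daff - d2) * ((d - daff) + d1 - 1) div 2"
  proof -
  interpret L: cor_setting d1 d2 d daff m0 S G T R C x0
    by (unfold_locales) (rule assms)+
  have A: "kerR d G T m0 C x0 R = U_iso00 d1 d2 G x0" by (rule L.ker_eq)
  have B: "bij_betw (PhiMap d2 (d - daff) (daff - d2) G x0)
               (param_dom d (d - daff) (daff - d2)) (kerR d G T m0 C x0 R)" by (rule L.Phi_bij)
  have C: "\<forall>a A1 A2 b B1 B2 c.
          (a, A1, A2) \<in> param_dom d (d - daff) (daff - d2) \<longrightarrow>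
          (b, B1, B2) \<in> param_dom d (d - daff) (daff - d2) \<longrightarrow>
          PhiMap d2 (d - daff) (daff - d2) G x0 (a + b, A1 + B1, A2 + B2)
            = restrict (\<lambda>g. PhiMap d2 (d - daff) (daff - d2) G x0 (a, A1, A2) g
                          + PhiMap d2 (d - daff) (daff - d2) G x0 (b, B1, B2) g) G
          \<and> PhiMap d2 (d - daff) (daff - d2) G x0 (c \<cdot>\<^sub>v a, c \<cdot>\<^sub>m A1, c \<cdot>\<^sub>m A2)
            = restrict (\<lambda>g. c \<cdot>\<^sub>v PhiMap d2 (d - daff) (daff - d2) G x0 (a, A1, A2) g) G"
    using L.Phi_linear by blast
  have D: "d + (d - daff) * (daff - d2) + (daff - d2) * (daff - d2 - 1) div 2
        = d + (daff - d2) * ((d - daff) + d1 - 1) div 2" by (rule L.arith)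
  show ?thesis using A B C D by (intro conjI)
qed

end
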